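(* Consider an electrical circuit, modeled as described in the context, whose incremental resistance and conductance matrices $R$ and $G$ are positive definite. An equilibrium point of this circuit is regular if and only if (i) the elastances $E_m$, $E_c$ of $q$-memristors and capacitors and the reluctances $\mathcal{R}_w$, $\mathcal{R}_l$ of $\varphi$-memristors and inductors are non-singular at the equilibrium, and (ii) the circuit has neither VLW-loops nor ICM-cutsets.
   Context: Circuit setting. The circuit has an underlying digraph $\mathcal{G}$ with $n$ nodes, $m$ branches and $k$ connected components. A cutset is a set of branches whose removal increases the number of connected components and which is minimal with this property; a loop is a cycle of branches. Let $B$ be a reduced loop matrix (full-row-rank set of rows of the loop matrix, entries $1,-1,0$ according as a branch is in a loop with the same orientation, opposite orientation, or not at all) and $D$ a reduced cutset matrix (analogous with oriented cutsets), with columns in the same branch order. Each branch carries a voltage $v$ and current $i$ and belongs to one of eight classes. $q$-devices ($v=\eta(q,i,t)$, $C^1$): $q$-memristors $v_m=\eta_1(q_m,i_m,t)$ (with $\partial\eta_1/\partial q_m\not\equiv0$, $\partial\eta_1/\partial i_m\not\equiv0$), capacitors $v_c=\eta_2(q_c,t)$, current-controlled resistors $v_r=\eta_3(i_r,t)$, voltage sources $v_u=\eta_4(t)$. $\varphi$-devices ($i=\zeta(\varphi,v,t)$, $C^1$): $\varphi$-memristors $i_w=\zeta_1(\varphi_w,v_w,t)$ (with $\partial\zeta_1/\partial\varphi_w\not\equiv0$, $\partial\zeta_1/\partial v_w\not\equiv0$), inductors $i_l=\zeta_2(\varphi_l,t)$, voltage-controlled resistors $i_g=\zeta_3(v_g,t)$,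 current sources $i_j=\zeta_4(t)$. Maps may be vector-valued. With $B=(B_q\ B_\varphi)$, $D=(D_q\ D_\varphi)$ split by $q$- and $\varphi$-devices, and $q_{mc}=(q_m,q_c)$, $\varphi_{wl}=(\varphi_w,\varphi_l)$, the circuit is modeled by the semiexplicit differential-algebraic system $q_{mc}'=i_{mc}$, $\varphi_{wl}'=v_{wl}$, $0=v_q-f(q_{mc},i_q,t)$, $0=i_\varphi-g(\varphi_{wl},v_\varphi,t)$, $0=B_qv_q+B_\varphi v_\varphi$, $0=D_qi_q+D_\varphi i_\varphi$, where $f$ collects $\eta_1,\dots,\eta_4$ and $g$ collects $\zeta_1,\dots,\zeta_4$. An equilibrium point is a point $(q_{mc},\varphi_{wl},v_q,i_q,v_\varphi,i_\varphi)$ at which the right-hand sides of all these equations vanish; it is regular if the Jacobian matrix $K$ of these right-hand sides with respect to $(q_{mc},\varphi_{wl},v_q,i_q,v_\varphi,i_\varphi)$ is non-singular there. Characteristic matrices: resistance $R=\partial\eta_3/\partial i_r$, conductance $G=\partial\zeta_3/\partial v_g$, elastances $E_m=\partial\eta_1/\partial q_m$, $E_c=\partial\eta_2/\partial q_c$, reluctances $\mathcal{R}_w=\partial\zeta_1/\partial\varphi_w$, $\mathcal{R}_l=\partial\zeta_2/\partial\varphi_l$. A square matrix $P$ is positive definite if $u^TPu>0$ for all $u\ne0$ (symmetry not assumed). A VLW-loop is a loop consisting only of voltage sources, inductors and/or $\varphi$-memristors; an ICM-cutset is a cutset consisting only of current sources, capacitors and/or $q$-memristors. *)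

theory Defs
  imports "HOL-Analysis.Analysis"
begin

datatype dev = QMem | Cap | CCR | VSrc | PhiMem | Ind | VCR | ISrc

definition qdev :: "dev \<Rightarrow> bool" where
  "qdev c \<longleftrightarrow> c \<in> {QMem, Cap, CCR, VSrc}"

definition phidev :: "dev \<Rightarrow> bool" where
  "phidev c \<longleftrightarrow> c \<in> {PhiMem, Ind, VCR, ISrc}"

text \<open>The vector-valued maps are represented on the full branch vector space; only the
  components of the relevant class are fed in (all others masked to 0) and only the
  components of the relevant class of the output are used.\<close>

record ('n, 'b) circuit =
  src :: "'b \<Rightarrow> 'n"
  dst :: "'b \<Rightarrow> 'n"
  cls :: "'b \<Rightarrow> dev"
  Bm :: "nat \<Rightarrow> 'b \<Rightarrow> real"
  rB :: nat
  Dm :: "nat \<Rightarrow> 'b \<Rightarrow> real"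
  rD :: nat
  eta1 :: "real^'b \<Rightarrow> real^'b \<Rightarrow> real \<Rightarrow> real^'b"
  eta2 :: "real^'b \<Rightarrow> real \<Rightarrow> real^'b"
  eta3 :: "real^'b \<Rightarrow> real \<Rightarrow> real^'b"
  eta4 :: "real \<Rightarrow> real^'b"
  zeta1 :: "real^'b \<Rightarrow> real^'b \<Rightarrow> real \<Rightarrow> real^'b"
  zeta2 :: "real^'b \<Rightarrow> real \<Rightarrow> real^'b"
  zeta3 :: "real^'b \<Rightarrow> real \<Rightarrow> real^'b"
  zeta4 :: "real \<Rightarrow> real^'b"

definition cset :: "('n, 'b::finite) circuit \<Rightarrow> dev \<Rightarrow> 'b set" where
  "cset C c = {b. cls C b = c}"

text \<open>An (oriented) loop = simple cycle in the underlying undirected multigraph, given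
  by distinct nodes vs!0,...,vs!(k-1) and distinct branches es!j joining vs!j and
  vs!((j+1) mod k); it is traversed in this order.\<close>

definition is_cycle :: "('n, 'b::finite) circuit \<Rightarrow> 'n list \<Rightarrow> 'b list \<Rightarrow> bool" where
  "is_cycle C vs es \<longleftrightarrow> length vs = length es \<and> es \<noteq> [] \<and> distinct vs \<and> distinct es \<and>
     (\<forall>j < length es.
        (src C (es!j) = vs!j \<and> dst C (es!j) = vs!((j+1) mod length es)) \<or>
        (dst C (es!j) = vs!j \<and> src C (es!j) = vs!((j+1) mod length es)))"

definition is_loop :: "('n, 'b::finite) circuit \<Rightarrow> 'b set \<Rightarrow> bool" where
  "is_loop C L \<longleftrightarrow> (\<exists>vs es. is_cycle C vs es \<and> L = set es)"

definition loop_vec :: "('n, 'b::finite) circuit \<Rightarrow> ('b \<Rightarrow> real) \<Rightarrow> bool" where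
  "loop_vec C w \<longleftrightarrow> (\<exists>vs es. is_cycle C vs es \<and>
     w = (\<lambda>b. \<Sum>j<length es. if es!j = b then (if src C b = vs!j then 1 else -1) else 0))"

definition adj :: "('n, 'b::finite) circuit \<Rightarrow> 'b set \<Rightarrow> 'n \<Rightarrow> 'n \<Rightarrow> bool" where
  "adj C E u v \<longleftrightarrow> (\<exists>b\<in>E. (src C b = u \<and> dst C b = v) \<or> (src C b = v \<and> dst C b = u))"

definition ncomp :: "('n::finite, 'b::finite) circuit \<Rightarrow> 'b set \<Rightarrow> nat" where
  "ncomp C E = card {X. \<exists>u. X = {v. (adj C E)\<^sup>*\<^sup>* u v}}"

definition increases_comp :: "('n::finite, 'b::finite) circuit \<Rightarrow> 'b set \<Rightarrow> bool" where
  "increases_comp C S \<longleftrightarrow> ncomp C (UNIV - S) > ncomp C UNIV"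

definition is_cutset :: "('n::finite, 'b::finite) circuit \<Rightarrow> 'b set \<Rightarrow> bool" where
  "is_cutset C S \<longleftrightarrow> increases_comp C S \<and> (\<forall>S'. S' \<subset> S \<longrightarrow> \<not> increases_comp C S')"

definition cutset_vec :: "('n::finite, 'b::finite) circuit \<Rightarrow> ('b \<Rightarrow> real) \<Rightarrow> bool" where
  "cutset_vec C w \<longleftrightarrow> (\<exists>S X. is_cutset C S \<and> S = {b. (src C b \<in> X) \<noteq> (dst C b \<in> X)} \<and>
     w = (\<lambda>b. if b \<in> S then (if src C b \<in> X then 1 else -1) else 0))"

definition reduced_matrix :: "(('b::finite \<Rightarrow> real) \<Rightarrow> bool) \<Rightarrow> (nat \<Rightarrow> 'b \<Rightarrow> real) \<Rightarrow> nat \<Rightarrow> bool" where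
  "reduced_matrix P A r \<longleftrightarrow>
     (\<forall>k<r. P (A k)) \<and>
     (\<forall>c. (\<forall>b. (\<Sum>k<r. c k * A k b) = 0) \<longrightarrow> (\<forall>k<r. c k = 0)) \<and>
     (\<forall>w. P w \<longrightarrow> (\<exists>c. \<forall>b. w b = (\<Sum>k<r. c k * A k b)))"

definition VLW_loop :: "('n, 'b::finite) circuit \<Rightarrow> 'b set \<Rightarrow> bool" where
  "VLW_loop C L \<longleftrightarrow> is_loop C L \<and> (\<forall>b\<in>L. cls C b \<in> {VSrc, Ind, PhiMem})"

definition ICM_cutset :: "('n::finite, 'b::finite) circuit \<Rightarrow> 'b set \<Rightarrow> bool" where
  "ICM_cutset C S \<longleftrightarrow> is_cutset C S \<and> (\<forall>b\<in>S. cls C b \<in> {ISrc, Cap, QMem})"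

definition C1_map :: "('a::real_normed_vector \<Rightarrow> 'c::real_normed_vector) \<Rightarrow> bool" where
  "C1_map f \<longleftrightarrow> (\<exists>D. (\<forall>z. (f has_derivative blinfun_apply (D z)) (at z)) \<and> continuous_on UNIV D)"

definition maskv :: "'b set \<Rightarrow> real^'b \<Rightarrow> real^'b" where
  "maskv S v = (\<chi> b. if b \<in> S then v $ b else 0)"

text \<open>Partial-derivative (Jacobian) matrix of f at z: entry (b,b') = d f_b / d z_b'.\<close>

definition jac :: "(real^'b \<Rightarrow> real^'b) \<Rightarrow> real^'b \<Rightarrow> 'b \<Rightarrow> 'b \<Rightarrow> real" where
  "jac f z b b' = frechet_derivative f (at z) (axis b' 1) $ b"

definition nonsingular :: "'r set \<Rightarrow> 'c set \<Rightarrow> ('r \<Rightarrow> 'c \<Rightarrow> real) \<Rightarrow> bool" where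
  "nonsingular Rw Cl A \<longleftrightarrow> (\<exists>L.
     (\<forall>e\<in>Rw. \<forall>e'\<in>Rw. (\<Sum>u\<in>Cl. A e u * L u e') = (if e = e' then 1 else 0)) \<and>
     (\<forall>u\<in>Cl. \<forall>u'\<in>Cl. (\<Sum>e\<in>Rw. L u e * A e u') = (if u = u' then 1 else 0)))"

definition posdef :: "'b set \<Rightarrow> ('b \<Rightarrow> 'b \<Rightarrow> real) \<Rightarrow> bool" where
  "posdef S A \<longleftrightarrow> (\<forall>u. (\<exists>b\<in>S. u b \<noteq> 0) \<longrightarrow> (\<Sum>b\<in>S. \<Sum>b'\<in>S. u b * A b b' * u b') > 0)"

text \<open>Unknowns: q_b (b a q-memristor or capacitor), phi_b (b a phi-memristor or inductor),
  v_b and i_b for every branch b.\<close>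

datatype 'b cvar = VQ 'b | VPh 'b | VV 'b | VI 'b

text \<open>Equations: q' = i (EQ), phi' = v (EPh), constitutive relations of q-devices (EV)
  and phi-devices (EI), rows of B v = 0 (EB) and of D i = 0 (ED).\<close>

datatype 'b ceq = EQ 'b | EPh 'b | EV 'b | EI 'b | EB nat | ED nat

definition vars :: "('n, 'b::finite) circuit \<Rightarrow> 'b cvar set" where
  "vars C = VQ ` (cset C QMem \<union> cset C Cap) \<union> VPh ` (cset C PhiMem \<union> cset C Ind)
            \<union> range VV \<union> range VI"

definition eqns :: "('n, 'b::finite) circuit \<Rightarrow> 'b ceq set" where
  "eqns C = EQ ` (cset C QMem \<union> cset C Cap) \<union> EPh ` (cset C PhiMem \<union> cset C Ind)
            \<union> EV ` {b. qdev (cls C b)} \<union> EI ` {b. phidev (cls C b)}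
            \<union> EB ` {..<rB C} \<union> ED ` {..<rD C}"

definition qv :: "'b set \<Rightarrow> ('b cvar \<Rightarrow> real) \<Rightarrow> real^'b" where
  "qv S x = (\<chi> b. if b \<in> S then x (VQ b) else 0)"
definition phv :: "'b set \<Rightarrow> ('b cvar \<Rightarrow> real) \<Rightarrow> real^'b" where
  "phv S x = (\<chi> b. if b \<in> S then x (VPh b) else 0)"
definition vv :: "'b set \<Rightarrow> ('b cvar \<Rightarrow> real) \<Rightarrow> real^'b" where
  "vv S x = (\<chi> b. if b \<in> S then x (VV b) else 0)"
definition iv :: "'b set \<Rightarrow> ('b cvar \<Rightarrow> real) \<Rightarrow> real^'b" where
  "iv S x = (\<chi> b. if b \<in> S then x (VI b) else 0)"

definition fq :: "('n, 'b::finite) circuit \<Rightarrow> real \<Rightarrow> ('b cvar \<Rightarrow> real) \<Rightarrow> 'b \<Rightarrow> real" where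
  "fq C t x b = (case cls C b of
      QMem \<Rightarrow> eta1 C (qv (cset C QMem) x) (iv (cset C QMem) x) t $ b
    | Cap \<Rightarrow> eta2 C (qv (cset C Cap) x) t $ b
    | CCR \<Rightarrow> eta3 C (iv (cset C CCR) x) t $ b
    | VSrc \<Rightarrow> eta4 C t $ b
    | _ \<Rightarrow> 0)"

definition gphi :: "('n, 'b::finite) circuit \<Rightarrow> real \<Rightarrow> ('b cvar \<Rightarrow> real) \<Rightarrow> 'b \<Rightarrow> real" where
  "gphi C t x b = (case cls C b of
      PhiMem \<Rightarrow> zeta1 C (phv (cset C PhiMem) x) (vv (cset C PhiMem) x) t $ b
    | Ind \<Rightarrow> zeta2 C (phv (cset C Ind) x) t $ b
    | VCR \<Rightarrow> zeta3 C (vv (cset C VCR) x) t $ b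
    | ISrc \<Rightarrow> zeta4 C t $ b
    | _ \<Rightarrow> 0)"

definition rhs :: "('n, 'b::finite) circuit \<Rightarrow> real \<Rightarrow> ('b cvar \<Rightarrow> real) \<Rightarrow> 'b ceq \<Rightarrow> real" where
  "rhs C t x e = (case e of
      EQ b \<Rightarrow> x (VI b)
    | EPh b \<Rightarrow> x (VV b)
    | EV b \<Rightarrow> x (VV b) - fq C t x b
    | EI b \<Rightarrow> x (VI b) - gphi C t x b
    | EB r \<Rightarrow> (\<Sum>b\<in>UNIV. Bm C r b * x (VV b))
    | ED r \<Rightarrow> (\<Sum>b\<in>UNIV. Dm C r b * x (VI b)))"

definition equilibrium :: "('n, 'b::finite) circuit \<Rightarrow> real \<Rightarrow> ('b cvar \<Rightarrow> real) \<Rightarrow> bool" where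
  "equilibrium C t x \<longleftrightarrow> (\<forall>e\<in>eqns C. rhs C t x e = 0)"

definition Kmat :: "('n, 'b::finite) circuit \<Rightarrow> real \<Rightarrow> ('b cvar \<Rightarrow> real) \<Rightarrow> 'b ceq \<Rightarrow> 'b cvar \<Rightarrow> real" where
  "Kmat C t x e u = deriv (\<lambda>s. rhs C t (x(u := x u + s)) e) 0"

definition regular_equilibrium :: "('n, 'b::finite) circuit \<Rightarrow> real \<Rightarrow> ('b cvar \<Rightarrow> real) \<Rightarrow> bool" where
  "regular_equilibrium C t x \<longleftrightarrow> equilibrium C t x \<and> nonsingular (eqns C) (vars C) (Kmat C t x)"

definition admissible_circuit :: "('n::finite, 'b::finite) circuit \<Rightarrow> bool" where
  "admissible_circuit C \<longleftrightarrow>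
     reduced_matrix (loop_vec C) (Bm C) (rB C) \<and>
     reduced_matrix (cutset_vec C) (Dm C) (rD C) \<and>
     C1_map (\<lambda>(q, i, t). eta1 C q i t) \<and> C1_map (\<lambda>(q, t). eta2 C q t) \<and>
     C1_map (\<lambda>(i, t). eta3 C i t) \<and> C1_map (eta4 C) \<and>
     C1_map (\<lambda>(p, v, t). zeta1 C p v t) \<and> C1_map (\<lambda>(p, t). zeta2 C p t) \<and>
     C1_map (\<lambda>(v, t). zeta3 C v t) \<and> C1_map (zeta4 C) \<and>
     (cset C QMem \<noteq> {} \<longrightarrow>
        (\<exists>q i t. \<exists>b\<in>cset C QMem. \<exists>b'\<in>cset C QMem.
           jac (\<lambda>q'. eta1 C q' (maskv (cset C QMem) i) t) (maskv (cset C QMem) q) b b' \<noteq> 0) \<and>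
        (\<exists>q i t. \<exists>b\<in>cset C QMem. \<exists>b'\<in>cset C QMem.
           jac (\<lambda>i'. eta1 C (maskv (cset C QMem) q) i' t) (maskv (cset C QMem) i) b b' \<noteq> 0)) \<and>
     (cset C PhiMem \<noteq> {} \<longrightarrow>
        (\<exists>p v t. \<exists>b\<in>cset C PhiMem. \<exists>b'\<in>cset C PhiMem.
           jac (\<lambda>p'. zeta1 C p' (maskv (cset C PhiMem) v) t) (maskv (cset C PhiMem) p) b b' \<noteq> 0) \<and>
        (\<exists>p v t. \<exists>b\<in>cset C PhiMem. \<exists>b'\<in>cset C PhiMem.
           jac (\<lambda>v'. zeta1 C (maskv (cset C PhiMem) p) v' t) (maskv (cset C PhiMem) v) b b' \<noteq> 0))"

definition R_posdef :: "('n, 'b::finite) circuit \<Rightarrow> bool" where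
  "R_posdef C \<longleftrightarrow> (\<forall>i t. posdef (cset C CCR)
      (jac (\<lambda>i'. eta3 C i' t) (maskv (cset C CCR) i)))"

definition G_posdef :: "('n, 'b::finite) circuit \<Rightarrow> bool" where
  "G_posdef C \<longleftrightarrow> (\<forall>v t. posdef (cset C VCR)
      (jac (\<lambda>v'. zeta3 C v' t) (maskv (cset C VCR) v)))"

definition Em :: "('n, 'b::finite) circuit \<Rightarrow> real \<Rightarrow> ('b cvar \<Rightarrow> real) \<Rightarrow> 'b \<Rightarrow> 'b \<Rightarrow> real" where
  "Em C t x = jac (\<lambda>q. eta1 C q (iv (cset C QMem) x) t) (qv (cset C QMem) x)"
definition Ec :: "('n, 'b::finite) circuit \<Rightarrow> real \<Rightarrow> ('b cvar \<Rightarrow> real) \<Rightarrow> 'b \<Rightarrow> 'b \<Rightarrow> real" where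
  "Ec C t x = jac (\<lambda>q. eta2 C q t) (qv (cset C Cap) x)"
definition Rw :: "('n, 'b::finite) circuit \<Rightarrow> real \<Rightarrow> ('b cvar \<Rightarrow> real) \<Rightarrow> 'b \<Rightarrow> 'b \<Rightarrow> real" where
  "Rw C t x = jac (\<lambda>p. zeta1 C p (vv (cset C PhiMem) x) t) (phv (cset C PhiMem) x)"
definition Rl :: "('n, 'b::finite) circuit \<Rightarrow> real \<Rightarrow> ('b cvar \<Rightarrow> real) \<Rightarrow> 'b \<Rightarrow> 'b \<Rightarrow> real" where
  "Rl C t x = jac (\<lambda>p. zeta2 C p t) (phv (cset C Ind) x)"

end

theory Submission
  imports Defs
begin

lemma sum_swap_mult:
  fixes f :: "'a \<Rightarrow> real"
  shows "(\<Sum>e\<in>I. f e * (\<Sum>j\<in>J. g e j * h j)) = (\<Sum>j\<in>J. (\<Sum>e\<in>I. g e j * f e) * h j)"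
  unfolding sum_distrib_left sum_distrib_right
  by (subst sum.swap) (simp add: mult_ac)

lemma sum_swap_mult2:
  fixes f :: "'a \<Rightarrow> real"
  shows "(\<Sum>e\<in>I. f e * (\<Sum>j\<in>J. g e j * h j)) = (\<Sum>j\<in>J. (\<Sum>e\<in>I. f e * g e j) * h j)"
  unfolding sum_distrib_left sum_distrib_right
  by (subst sum.swap) (simp add: mult_ac)

lemma sum_ind:
  fixes f :: "'a \<Rightarrow> real"
  assumes "finite J" "u \<in> J"
  shows "(\<Sum>j\<in>J. (if j = u then 1 else 0) * f j) = f u"
    "(\<Sum>j\<in>J. (if u = j then 1 else 0) * f j) = f u"
    "(\<Sum>j\<in>J. f j * (if j = u then 1 else 0)) = f u"
    "(\<Sum>j\<in>J. f j * (if u = j then 1 else 0)) = f u"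
proof -
  have "(\<Sum>j\<in>J. (if j = u then 1 else 0) * f j) = (\<Sum>j\<in>J. if j = u then f j else 0)"
    "(\<Sum>j\<in>J. (if u = j then 1 else 0) * f j) = (\<Sum>j\<in>J. if j = u then f j else 0)"
    "(\<Sum>j\<in>J. f j * (if j = u then 1 else 0)) = (\<Sum>j\<in>J. if j = u then f j else 0)"
    "(\<Sum>j\<in>J. f j * (if u = j then 1 else 0)) = (\<Sum>j\<in>J. if j = u then f j else 0)"
    by (auto intro!: sum.cong)
  moreover have "(\<Sum>j\<in>J. if j = u then f j else 0) = f u" using assms by (simp add: sum.delta')
  ultimately show "(\<Sum>j\<in>J. (if j = u then 1 else 0) * f j) = f u"
    "(\<Sum>j\<in>J. (if u = j then 1 else 0) * f j) = f u"
    "(\<Sum>j\<in>J. f j * (if j = u then 1 else 0)) = f u"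
    "(\<Sum>j\<in>J. f j * (if u = j then 1 else 0)) = f u" by simp_all
qed

lemma elim_nontriv:
  fixes A :: "'i \<Rightarrow> 'j \<Rightarrow> real"
  assumes "finite I" "finite J" "card I < card J"
  shows "\<exists>x. (\<exists>j\<in>J. x j \<noteq> 0) \<and> (\<forall>i\<in>I. (\<Sum>j\<in>J. A i j * x j) = 0)"
  using assms
proof (induction I arbitrary: J A rule: finite_induct)
  case empty
  then obtain j where "j \<in> J" by fastforce
  then show ?case by (intro exI[of _ "\<lambda>_. 1"]) auto
next
  case (insert i0 I)
  show ?case
  proof (cases "\<forall>j\<in>J. A i0 j = 0")
    case True
    have "card I < card J" using insert by simp
    then obtain x where x: "\<exists>j\<in>J. x j \<noteq> 0" "\<forall>i\<in>I. (\<Sum>j\<in>J. A i j * x j) = 0"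
      using insert.IH[OF insert.prems(1)] by blast
    show ?thesis using x True by (intro exI[of _ x]) auto
  next
    case False
    then obtain j0 where j0: "j0 \<in> J" "A i0 j0 \<noteq> 0" by blast
    define a where "a = A i0 j0"
    define A' where "A' = (\<lambda>i j. A i j - A i j0 * A i0 j / a)"
    have c: "card I < card (J - {j0})" using insert j0 by simp
    obtain y where y: "\<exists>j\<in>J - {j0}. y j \<noteq> 0" "\<forall>i\<in>I. (\<Sum>j\<in>J - {j0}. A' i j * y j) = 0"
      using insert.IH[of "J - {j0}" A'] c insert.prems by auto
    define x where "x = (\<lambda>j. if j = j0 then - (\<Sum>j\<in>J - {j0}. A i0 j * y j) / a else y j)"
    have split: "(\<Sum>j\<in>J. f j) = f j0 + (\<Sum>j\<in>J - {j0}. f j)" for f :: "'j \<Rightarrow> real"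
      using j0(1) insert.prems(1) by (simp add: sum.remove)
    have xs: "(\<Sum>j\<in>J - {j0}. g j * x j) = (\<Sum>j\<in>J - {j0}. g j * y j)" for g
      by (rule sum.cong) (auto simp: x_def)
    have ai: "a \<noteq> 0" using j0 a_def by simp
    have eq0: "(\<Sum>j\<in>J. A i0 j * x j) = 0"
      unfolding split xs using ai by (simp add: x_def a_def[symmetric])
    have eqi: "(\<Sum>j\<in>J. A i j * x j) = 0" if "i \<in> I" for i
    proof -
      have "(\<Sum>j\<in>J. A i j * x j) = A i j0 * x j0 + (\<Sum>j\<in>J - {j0}. A i j * y j)"
        unfolding split xs ..
      also have "\<dots> = (\<Sum>j\<in>J - {j0}. A' i j * y j)"
        by (simp add: x_def A'_def algebra_simps sum_subtractf sum_divide_distrib sum_distrib_left)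
      finally show ?thesis using y that by simp
    qed
    have nz: "\<exists>j\<in>J. x j \<noteq> 0" using y(1) by (auto simp: x_def)
    show ?thesis using nz eq0 eqi by (intro exI[of _ x]) auto
  qed
qed

lemma solve_sys:
  fixes A :: "'i \<Rightarrow> 'j \<Rightarrow> real"
  assumes fin: "finite I" "finite J" and c: "card I \<le> card J"
    and inj: "\<forall>x. (\<forall>i\<in>I. (\<Sum>j\<in>J. A i j * x j) = 0) \<longrightarrow> (\<forall>j\<in>J. x j = 0)"
  shows "\<exists>x. \<forall>i\<in>I. (\<Sum>j\<in>J. A i j * x j) = b i"
proof -
  define J' where "J' = insert None (Some ` J)"
  define A' where "A' = (\<lambda>i jo. case jo of None \<Rightarrow> - b i | Some j \<Rightarrow> A i j)"
  have sJ: "(\<Sum>jo\<in>J'. f jo) = f None + (\<Sum>j\<in>J. f (Some j))" for f :: "'j option \<Rightarrow> real"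
    unfolding J'_def using fin by (simp add: sum.reindex)
  have "card J' = card J + 1" unfolding J'_def using fin by (simp add: card_image)
  then obtain z where z: "\<exists>j\<in>J'. z j \<noteq> 0" "\<forall>i\<in>I. (\<Sum>j\<in>J'. A' i j * z j) = 0"
    using elim_nontriv[of I J' A'] fin c J'_def by auto
  have zz: "\<forall>i\<in>I. - b i * z None + (\<Sum>j\<in>J. A i j * z (Some j)) = 0"
    using z(2) unfolding sJ A'_def by simp
  have "z None \<noteq> 0"
  proof
    assume h: "z None = 0"
    then have "\<forall>i\<in>I. (\<Sum>j\<in>J. A i j * z (Some j)) = 0" using zz by simp
    then have "\<forall>j\<in>J. z (Some j) = 0" using inj[rule_format, of "\<lambda>j. z (Some j)"] by blast
    then show False using z(1) h J'_def by auto
  qed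
  then show ?thesis
    using zz by (intro exI[of _ "\<lambda>j. z (Some j) / z None"])
      (auto simp: sum_divide_distrib[symmetric] field_simps)
qed

lemma nonsing_from_inj:
  fixes A :: "'i \<Rightarrow> 'j \<Rightarrow> real"
  assumes fin: "finite I" "finite J"
    and inj1: "\<forall>x. (\<forall>i\<in>I. (\<Sum>j\<in>J. A i j * x j) = 0) \<longrightarrow> (\<forall>j\<in>J. x j = 0)"
    and inj2: "\<forall>y. (\<forall>j\<in>J. (\<Sum>i\<in>I. y i * A i j) = 0) \<longrightarrow> (\<forall>i\<in>I. y i = 0)"
  shows "nonsingular I J A"
proof -
  have c1: "\<not> card I < card J"
  proof
    assume "card I < card J"
    from elim_nontriv[OF fin this, of A] inj1 show False by blast
  qed
  have c2: "\<not> card J < card I"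
  proof
    assume "card J < card I"
    from elim_nontriv[OF fin(2,1) this, of "\<lambda>j i. A i j"] inj2 show False
      by (auto simp: mult.commute)
  qed
  have "\<forall>e'\<in>I. \<exists>x. \<forall>i\<in>I. (\<Sum>j\<in>J. A i j * x j) = (if i = e' then 1 else 0)"
    using solve_sys[OF fin _ inj1] c1 c2 by auto
  then obtain R where R: "\<forall>e'\<in>I. \<forall>i\<in>I. (\<Sum>j\<in>J. A i j * R e' j) = (if i = e' then 1 else 0)"
    by metis
  have inj2': "\<forall>x. (\<forall>j\<in>J. (\<Sum>i\<in>I. A i j * x i) = 0) \<longrightarrow> (\<forall>i\<in>I. x i = 0)"
    using inj2 by (simp add: mult.commute)
  have "\<forall>u\<in>J. \<exists>y. \<forall>j\<in>J. (\<Sum>i\<in>I. A i j * y i) = (if j = u then 1 else 0)"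
    proof
    fix u assume "u \<in> J"
    from solve_sys[OF fin(2,1) _ inj2', where b = "\<lambda>j. if j = u then 1 else 0"] c1 c2
    show "\<exists>y. \<forall>j\<in>J. (\<Sum>i\<in>I. A i j * y i) = (if j = u then 1 else 0)" by auto
  qed
  then obtain Lf where L: "\<forall>u\<in>J. \<forall>j\<in>J. (\<Sum>i\<in>I. A i j * Lf u i) = (if j = u then 1 else 0)"
    by metis
  have LR: "Lf u e' = R e' u" if "u \<in> J" "e' \<in> I" for u e'
  proof -
    have "Lf u e' = (\<Sum>e\<in>I. Lf u e * (if e = e' then 1 else 0))"
      using that fin by (simp add: sum_ind)
    also have "\<dots> = (\<Sum>e\<in>I. Lf u e * (\<Sum>j\<in>J. A e j * R e' j))"
      using R that by (intro sum.cong) auto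
    also have "\<dots> = (\<Sum>j\<in>J. (\<Sum>e\<in>I. A e j * Lf u e) * R e' j)"
      by (rule sum_swap_mult)
    also have "\<dots> = (\<Sum>j\<in>J. (if j = u then 1 else 0) * R e' j)"
      using L that by (intro sum.cong) auto
    also have "\<dots> = R e' u" using that fin by (simp add: sum_ind)
    finally show ?thesis .
  qed
  show ?thesis unfolding nonsingular_def
  proof (intro exI[of _ "\<lambda>u e'. R e' u"] conjI ballI)
    fix e e' assume "e \<in> I" "e' \<in> I"
    then show "(\<Sum>u\<in>J. A e u * R e' u) = (if e = e' then 1 else 0)" using R by auto
  next
    fix u u' assume u: "u \<in> J" "u' \<in> J"
    have "(\<Sum>e\<in>I. R e u * A e u') = (\<Sum>e\<in>I. A e u' * Lf u e)"
      using LR u by (intro sum.cong) (auto simp: mult.commute)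
    also have "\<dots> = (if u = u' then 1 else 0)" using L u by auto
    finally show "(\<Sum>e\<in>I. R e u * A e u') = (if u = u' then 1 else 0)" .
  qed
qed

lemma square_inj_nonsing:
  fixes A :: "'i \<Rightarrow> 'i \<Rightarrow> real"
  assumes fin: "finite I"
    and inj1: "\<forall>x. (\<forall>i\<in>I. (\<Sum>j\<in>I. A i j * x j) = 0) \<longrightarrow> (\<forall>j\<in>I. x j = 0)"
  shows "nonsingular I I A"
proof (rule nonsing_from_inj[OF fin fin inj1], intro allI impI ballI)
  have "\<forall>e'\<in>I. \<exists>x. \<forall>i\<in>I. (\<Sum>j\<in>I. A i j * x j) = (if i = e' then 1 else 0)"
    using solve_sys[OF fin fin _ inj1] by auto
  then obtain R where R: "\<forall>e'\<in>I. \<forall>i\<in>I. (\<Sum>j\<in>I. A i j * R e' j) = (if i = e' then 1 else 0)"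
    by metis
  fix y i assume y: "\<forall>j\<in>I. (\<Sum>i\<in>I. y i * A i j) = 0" and i: "i \<in> I"
  have "y i = (\<Sum>e\<in>I. y e * (if e = i then 1 else 0))"
    using i fin by (simp add: sum_ind)
  also have "\<dots> = (\<Sum>e\<in>I. y e * (\<Sum>j\<in>I. A e j * R i j))"
    using R i by (intro sum.cong) auto
  also have "\<dots> = (\<Sum>j\<in>I. (\<Sum>e\<in>I. y e * A e j) * R i j)"
    by (rule sum_swap_mult2)
  also have "\<dots> = 0" using y by simp
  finally show "y i = 0" .
qed

lemma nonsing_kernel:
  assumes "nonsingular I J A" "finite I" "finite J"
    and "\<forall>i\<in>I. (\<Sum>j\<in>J. A i j * x j) = 0" "u \<in> J"
  shows "x u = 0"
proof -
  from assms(1) obtain L where L: "\<forall>u\<in>J. \<forall>u'\<in>J. (\<Sum>e\<in>I. L u e * A e u') = (if u = u' then 1 else 0)"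
    unfolding nonsingular_def by blast
  have "x u = (\<Sum>u'\<in>J. (if u = u' then 1 else 0) * x u')" using assms(3,5) by (simp add: sum_ind)
  also have "\<dots> = (\<Sum>u'\<in>J. (\<Sum>e\<in>I. L u e * A e u') * x u')"
    using L assms(5) by (intro sum.cong) auto
  also have "\<dots> = (\<Sum>e\<in>I. L u e * (\<Sum>u'\<in>J. A e u' * x u'))"
    by (rule sum_swap_mult2[symmetric])
  also have "\<dots> = 0" using assms(4) by simp
  finally show ?thesis .
qed

lemma nonsing_lkernel:
  assumes "nonsingular I J A" "finite I" "finite J"
    and "\<forall>j\<in>J. (\<Sum>i\<in>I. y i * A i j) = 0" "e \<in> I"
  shows "y e = 0"
proof -
  from assms(1) obtain L where L: "\<forall>e\<in>I. \<forall>e'\<in>I. (\<Sum>u\<in>J. A e u * L u e') = (if e = e' then 1 else 0)"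
    unfolding nonsingular_def by blast
  have "y e = (\<Sum>e'\<in>I. y e' * (if e' = e then 1 else 0))" using assms(2,5) by (simp add: sum_ind)
  also have "\<dots> = (\<Sum>e'\<in>I. y e' * (\<Sum>u\<in>J. A e' u * L u e))"
    using L assms(5) by (intro sum.cong) auto
  also have "\<dots> = (\<Sum>u\<in>J. (\<Sum>e'\<in>I. y e' * A e' u) * L u e)"
    by (rule sum_swap_mult2)
  also have "\<dots> = 0" using assms(4) by simp
  finally show ?thesis .
qed

abbreviation reach :: "('n, 'b::finite) circuit \<Rightarrow> 'b set \<Rightarrow> 'n \<Rightarrow> 'n \<Rightarrow> bool" where
  "reach C E \<equiv> (adj C E)\<^sup>*\<^sup>*"

definition joins :: "('n, 'b::finite) circuit \<Rightarrow> 'b \<Rightarrow> 'n \<Rightarrow> 'n \<Rightarrow> bool" where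
  "joins C f u v \<longleftrightarrow> (src C f = u \<and> dst C f = v) \<or> (dst C f = u \<and> src C f = v)"

lemma adj_sym: "adj C E u v \<Longrightarrow> adj C E v u"
  unfolding adj_def by blast

lemma adj_joins: "adj C E u v \<longleftrightarrow> (\<exists>f\<in>E. joins C f u v)"
  unfolding adj_def joins_def by blast

lemma reach_sym: "reach C E u v \<Longrightarrow> reach C E v u"
proof (induction rule: rtranclp_induct)
  case base then show ?case by simp
next
  case (step y z)
  then show ?case using adj_sym[OF step(2)] by (meson converse_rtranclp_into_rtranclp)
qed

lemma reach_trans: "reach C E u v \<Longrightarrow> reach C E v w \<Longrightarrow> reach C E u w"
  by (rule rtranclp_trans)

lemma adj_mono: "E \<subseteq> E' \<Longrightarrow> adj C E u v \<Longrightarrow> adj C E' u v"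
  unfolding adj_def by blast

lemma reach_mono: assumes "E \<subseteq> E'" "reach C E u v" shows "reach C E' u v"
  using assms(2)
proof (induction rule: rtranclp_induct)
  case base then show ?case by simp
next
  case (step y z) then show ?case by (meson assms(1) adj_mono rtranclp.rtrancl_into_rtrancl)
qed

lemma reach_edge: "b \<in> E \<Longrightarrow> reach C E (src C b) (dst C b)"
  by (rule r_into_rtranclp) (auto simp: adj_def)

lemma reach_edge': "b \<in> E \<Longrightarrow> reach C E (dst C b) (src C b)"
  by (rule r_into_rtranclp) (auto simp: adj_def)

lemma reach_closed:
  assumes "\<And>u v. u \<in> A \<Longrightarrow> adj C E u v \<Longrightarrow> v \<in> A" "reach C E u v" "u \<in> A"
  shows "v \<in> A"
  using assms(2,3) by (induction rule: rtranclp_induct) (auto intro: assms(1))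

lemma reach_subst:
  assumes "E' \<subseteq> E" "\<forall>b\<in>E - E'. reach C E' (src C b) (dst C b)" "reach C E u v"
  shows "reach C E' u v"
  using assms(3)
proof (induction rule: rtranclp_induct)
  case base then show ?case by simp
next
  case (step y z)
  from step(2) obtain b where b: "b \<in> E" "(src C b = y \<and> dst C b = z) \<or> (src C b = z \<and> dst C b = y)"
    unfolding adj_def by blast
  have "reach C E' y z"
  proof (cases "b \<in> E'")
    case True then show ?thesis using b reach_edge[of b E' C] reach_edge'[of b E' C] by auto
  next
    case False
    then have "reach C E' (src C b) (dst C b)" using assms(2) b by auto
    then show ?thesis using b reach_sym by metis
  qed
  then show ?case using step(3) reach_trans by metis
qed

lemma ncomp_alt: "ncomp C E = card (range (\<lambda>u. {v. reach C E u v}))"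
  unfolding ncomp_def by (simp add: full_SetCompr_eq)

lemma ncomp_eq:
  assumes "\<And>u v. reach C E u v = reach C E' u v"
  shows "ncomp C E = ncomp C E'"
proof -
  have "reach C E = reach C E'" using assms by (intro ext) simp
  then show ?thesis unfolding ncomp_def by simp
qed

lemma ncomp_less:
  fixes C :: "('n::finite, 'b::finite) circuit"
  assumes "E' \<subseteq> E" "reach C E a b" "\<not> reach C E' a b"
  shows "ncomp C E < ncomp C E'"
proof -
  define R where "R = (\<lambda>u. {v. reach C E u v})"
  define R' where "R' = (\<lambda>u. {v. reach C E' u v})"
  define g where "g = (\<lambda>X. {v. \<exists>u\<in>X. reach C E u v})"
  have gR: "g (R' u) = R u" for u
  proof
    show "g (R' u) \<subseteq> R u"
    proof
      fix v assume "v \<in> g (R' u)"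
      then obtain w where w: "reach C E' u w" "reach C E w v" unfolding g_def R'_def by auto
      have "reach C E u w" by (rule reach_mono[OF assms(1) w(1)])
      then show "v \<in> R u" unfolding R_def using w(2) by (simp add: reach_trans)
    qed
    show "R u \<subseteq> g (R' u)" unfolding g_def R'_def R_def by blast
  qed
  have img: "range R = g ` range R'" using gR by (auto simp: image_image)
  have ninj: "\<not> inj_on g (range R')"
  proof
    assume i: "inj_on g (range R')"
    have "R a = R b"
    proof -
      have "reach C E b a" by (rule reach_sym[OF assms(2)])
      then show ?thesis unfolding R_def using assms(2) by (auto intro: reach_trans)
    qed
    then have "g (R' a) = g (R' b)" using gR by simp
    then have "R' a = R' b" using i by (auto dest: inj_onD)
    then have "b \<in> R' a" unfolding R'_def by auto
    then show False using assms(3) unfolding R'_def by simp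
  qed
  have fin: "finite (range R')" by simp
  have "card (g ` range R') < card (range R')"
    using ninj fin card_image_le[OF fin, of g] inj_on_iff_eq_card[OF fin, of g] by linarith
  then show ?thesis unfolding ncomp_alt R_def[symmetric] R'_def[symmetric] img .
qed

lemma min_subset:
  assumes "finite F" "P F"
  shows "\<exists>S\<subseteq>F. P S \<and> (\<forall>S'. S' \<subset> S \<longrightarrow> \<not> P S')"
  using assms
proof (induction F rule: finite_psubset_induct)
  case (psubset A)
  show ?case
  proof (cases "\<forall>S'. S' \<subset> A \<longrightarrow> \<not> P S'")
    case True then show ?thesis using psubset.prems by (intro exI[of _ A]) simp
  next
    case False
    then obtain B where B: "B \<subset> A" "P B" by blast
    from psubset.IH[OF B] obtain S where "S \<subseteq> B" "P S" "\<forall>S'. S' \<subset> S \<longrightarrow> \<not> P S'" by blast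
    then show ?thesis using B(1) by (intro exI[of _ S]) auto
  qed
qed

definition spath :: "('n, 'b::finite) circuit \<Rightarrow> 'b set \<Rightarrow> 'n \<Rightarrow> 'n \<Rightarrow> 'n list \<Rightarrow> 'b list \<Rightarrow> bool" where
  "spath C E a b ns es \<longleftrightarrow> length ns = Suc (length es) \<and> hd ns = a \<and> last ns = b \<and>
     distinct ns \<and> distinct es \<and> set es \<subseteq> E \<and>
     (\<forall>j<length es. joins C (es!j) (ns!j) (ns!Suc j))"

lemma reach_spath:
  assumes "reach C E a b"
  shows "\<exists>ns es. spath C E a b ns es"
  using assms
proof (induction rule: rtranclp_induct)
  case base
  show ?case by (rule exI[of _ "[a]"], rule exI[of _ "[]"]) (simp add: spath_def)
next
  case (step y z)
  from step.IH obtain ns es where p: "spath C E a y ns es" by blast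
  from step(2) obtain f where f: "f \<in> E" "joins C f y z" using adj_joins by metis
  have lns: "length ns = Suc (length es)" and hns: "hd ns = a" and lst: "last ns = y"
    and dns: "distinct ns" and des: "distinct es" and ses: "set es \<subseteq> E"
    and jn: "\<forall>j<length es. joins C (es!j) (ns!j) (ns!Suc j)"
    using p unfolding spath_def by auto
  have nsne: "ns \<noteq> []" using lns by auto
  show ?case
  proof (cases "z \<in> set ns")
    case True
    then obtain i where i: "i < length ns" "ns ! i = z" by (auto simp: in_set_conv_nth)
    have "spath C E a z (take (Suc i) ns) (take i es)"
      unfolding spath_def
    proof (intro conjI)
      show "length (take (Suc i) ns) = Suc (length (take i es))" using i lns by simp
      show "hd (take (Suc i) ns) = a" using hns nsne by (simp add: hd_take)
      show "last (take (Suc i) ns) = z" using i by (simp add: take_Suc_conv_app_nth)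
      show "distinct (take (Suc i) ns)" using dns by simp
      show "distinct (take i es)" using des by simp
      show "set (take i es) \<subseteq> E" using ses by (meson order_trans set_take_subset)
      show "\<forall>j<length (take i es). joins C (take i es ! j) (take (Suc i) ns ! j) (take (Suc i) ns ! Suc j)"
        using jn i lns by auto
    qed
    then show ?thesis by blast
  next
    case False
    have fnot: "f \<notin> set es"
    proof
      assume "f \<in> set es"
      then obtain j where j: "j < length es" "es ! j = f" by (auto simp: in_set_conv_nth)
      have "joins C f (ns!j) (ns!Suc j)" using jn j by auto
      then have "z \<in> {ns!j, ns!Suc j}" using f(2) unfolding joins_def by auto
      moreover have "ns!j \<in> set ns" "ns!Suc j \<in> set ns" using j lns by auto
      ultimately show False using False by auto
    qed
    have lst2: "ns ! length es = y" using lst lns nsne by (simp add: last_conv_nth)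
    have "spath C E a z (ns @ [z]) (es @ [f])"
      unfolding spath_def
    proof (intro conjI)
      show "length (ns @ [z]) = Suc (length (es @ [f]))" using lns by simp
      show "hd (ns @ [z]) = a" using hns nsne by simp
      show "last (ns @ [z]) = z" by simp
      show "distinct (ns @ [z])" using dns False by simp
      show "distinct (es @ [f])" using des fnot by simp
      show "set (es @ [f]) \<subseteq> E" using ses f by simp
      show "\<forall>j<length (es @ [f]). joins C ((es @ [f]) ! j) ((ns @ [z]) ! j) ((ns @ [z]) ! Suc j)"
      proof (intro allI impI)
        fix j assume "j < length (es @ [f])"
        then consider "j < length es" | "j = length es" by fastforce
        then show "joins C ((es @ [f]) ! j) ((ns @ [z]) ! j) ((ns @ [z]) ! Suc j)"
        proof cases
          case 1 then show ?thesis using jn lns by (simp add: nth_append)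
        next
          case 2 then show ?thesis using f lns lst2 by (simp add: nth_append)
        qed
      qed
    qed
    then show ?thesis by blast
  qed
qed

lemma nth_mod_app:
  assumes "j < length vs"
  shows "vs ! ((j+1) mod length vs) = (vs @ [vs!0]) ! (j+1)"
proof (cases "j + 1 < length vs")
  case True then show ?thesis by (simp add: nth_append)
next
  case False
  then have "j + 1 = length vs" using assms by simp
  then show ?thesis by simp
qed

lemma cycle_through:
  assumes "e \<notin> E" "reach C E (dst C e) (src C e)"
  shows "\<exists>vs es. is_cycle C vs es \<and> es!0 = e \<and> vs!0 = src C e \<and> set es \<subseteq> insert e E"
proof -
  from reach_spath[OF assms(2)] obtain ns es where p: "spath C E (dst C e) (src C e) ns es" by blast
  have lns: "length ns = Suc (length es)" and hns: "hd ns = dst C e" and lst: "last ns = src C e"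
    and dns: "distinct ns" and des: "distinct es" and ses: "set es \<subseteq> E"
    and jn: "\<forall>j<length es. joins C (es!j) (ns!j) (ns!Suc j)"
    using p unfolding spath_def by auto
  have nsne: "ns \<noteq> []" using lns by auto
  define vs where "vs = src C e # butlast ns"
  define es' where "es' = e # es"
  have lvs: "length vs = length es'" unfolding vs_def es'_def using lns by simp
  have app: "vs @ [vs!0] = src C e # ns"
    unfolding vs_def using lst nsne by (simp, metis append_butlast_last_id)
  have vsj: "vs ! j = (src C e # ns) ! j" if "j < length vs" for j
    using that by (metis app nth_append)
  have dvs: "distinct vs"
  proof -
    have "ns = butlast ns @ [src C e]" using lst nsne by (metis append_butlast_last_id)
    then have "distinct (butlast ns @ [src C e])" using dns by metis
    then show ?thesis unfolding vs_def by simp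
  qed
  have cyc: "is_cycle C vs es'"
    unfolding is_cycle_def
  proof (intro conjI allI impI)
    show "length vs = length es'" by (rule lvs)
    show "es' \<noteq> []" unfolding es'_def by simp
    show "distinct vs" by (rule dvs)
    show "distinct es'" unfolding es'_def using des ses assms(1) by auto
  next
    fix j assume j: "j < length es'"
    have m: "vs ! ((j+1) mod length es') = (src C e # ns) ! (j+1)"
      using nth_mod_app[of j vs] lvs j app by simp
    have jj: "joins C (es'!j) ((src C e # ns) ! j) ((src C e # ns) ! (j+1))"
    proof (cases j)
      case 0
      have "ns ! 0 = dst C e" using hns nsne by (simp add: hd_conv_nth)
      then show ?thesis using 0 unfolding es'_def joins_def by simp
    next
      case (Suc i)
      then show ?thesis using jn j unfolding es'_def by simp
    qed
    show "src C (es' ! j) = vs ! j \<and> dst C (es' ! j) = vs ! ((j + 1) mod length es') \<or>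
          dst C (es' ! j) = vs ! j \<and> src C (es' ! j) = vs ! ((j + 1) mod length es')"
      using jj m vsj[of j] j lvs unfolding joins_def by simp
  qed
  show ?thesis
    using cyc ses by (intro exI[of _ vs] exI[of _ es']) (auto simp: vs_def es'_def)
qed

definition lv :: "('n, 'b::finite) circuit \<Rightarrow> 'n list \<Rightarrow> 'b list \<Rightarrow> 'b \<Rightarrow> real" where
  "lv C vs es = (\<lambda>b. \<Sum>j<length es. if es!j = b then (if src C b = vs!j then 1 else -1) else 0)"

definition cut :: "('n, 'b::finite) circuit \<Rightarrow> 'n set \<Rightarrow> 'b set" where
  "cut C X = {b. (src C b \<in> X) \<noteq> (dst C b \<in> X)}"

definition cv :: "('n, 'b::finite) circuit \<Rightarrow> 'n set \<Rightarrow> 'b \<Rightarrow> real" where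
  "cv C X = (\<lambda>b. if b \<in> cut C X then (if src C b \<in> X then 1 else -1) else 0)"

lemma loop_vec_lv: "loop_vec C w \<longleftrightarrow> (\<exists>vs es. is_cycle C vs es \<and> w = lv C vs es)"
  unfolding loop_vec_def lv_def by simp

lemma cutset_vec_cv: "cutset_vec C w \<longleftrightarrow> (\<exists>X. is_cutset C (cut C X) \<and> w = cv C X)"
proof
  assume "cutset_vec C w"
  then obtain S X where "is_cutset C S" "S = {b. (src C b \<in> X) \<noteq> (dst C b \<in> X)}"
    "w = (\<lambda>b. if b \<in> S then (if src C b \<in> X then 1 else -1) else 0)"
    unfolding cutset_vec_def by blast
  then show "\<exists>X. is_cutset C (cut C X) \<and> w = cv C X"
    unfolding cv_def cut_def by (intro exI[of _ X]) simp
next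
  assume "\<exists>X. is_cutset C (cut C X) \<and> w = cv C X"
  then obtain X where "is_cutset C (cut C X)" "w = cv C X" by blast
  then show "cutset_vec C w" unfolding cutset_vec_def cv_def
    by (intro exI[of _ "cut C X"] exI[of _ X]) (simp add: cut_def)
qed

lemma lv_dot:
  "(\<Sum>b\<in>UNIV. lv C vs es b * v b) = (\<Sum>j<length es. (if src C (es!j) = vs!j then 1 else -1) * v (es!j))"
proof -
  have "(\<Sum>b\<in>UNIV. lv C vs es b * v b) =
        (\<Sum>b\<in>UNIV. \<Sum>j<length es. (if es!j = b then (if src C b = vs!j then 1 else -1) * v b else 0))"
    unfolding lv_def sum_distrib_right by (intro sum.cong refl) auto
  also have "\<dots> = (\<Sum>j<length es. \<Sum>b\<in>UNIV. (if es!j = b then (if src C b = vs!j then 1 else -1) * v b else 0))"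
    by (rule sum.swap)
  also have "\<dots> = (\<Sum>j<length es. (if src C (es!j) = vs!j then 1 else -1) * v (es!j))"
    by (simp add: sum.delta)
  finally show ?thesis .
qed

lemma lv_nth:
  assumes "is_cycle C vs es" "k < length es"
  shows "lv C vs es (es!k) = (if src C (es!k) = vs!k then 1 else -1)"
proof -
  have d: "distinct es" using assms(1) unfolding is_cycle_def by simp
  have "lv C vs es (es!k) = (\<Sum>j<length es. if j = k then (if src C (es!k) = vs!k then 1 else -1) else 0)"
    unfolding lv_def using d assms(2) by (intro sum.cong refl) (auto simp: nth_eq_iff_index_eq)
  also have "\<dots> = (if src C (es!k) = vs!k then 1 else -1)" using assms(2) by (simp add: sum.delta')
  finally show ?thesis .
qed

lemma lv_supp: "lv C vs es b \<noteq> 0 \<Longrightarrow> b \<in> set es"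
proof (rule ccontr)
  assume "lv C vs es b \<noteq> 0" "b \<notin> set es"
  then show False unfolding lv_def by (auto intro!: sum.neutral simp: in_set_conv_nth)
qed

lemma tele:
  fixes f :: "nat \<Rightarrow> real"
  assumes "0 < n"
  shows "(\<Sum>j<n. f j - f ((j+1) mod n)) = 0"
proof -
  obtain m where n: "n = Suc m" using assms by (cases n) auto
  have "(\<Sum>j<n. f ((j+1) mod n)) = (\<Sum>j<m. f ((j+1) mod n)) + f ((m+1) mod n)"
    unfolding n by simp
  also have "(\<Sum>j<m. f ((j+1) mod n)) = (\<Sum>j<m. f (Suc j))"
    unfolding n by (intro sum.cong refl) simp
  also have "f ((m+1) mod n) = f 0" unfolding n by simp
  also have "(\<Sum>j<m. f (Suc j)) + f 0 = (\<Sum>j<n. f j)" unfolding n sum.lessThan_Suc_shift by simp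
  finally show ?thesis by (simp add: sum_subtractf)
qed

lemma orth:
  assumes "is_cycle C vs es"
  shows "(\<Sum>b\<in>UNIV. lv C vs es b * cv C X b) = 0"
proof -
  define chi where "chi = (\<lambda>u. if u \<in> X then 1 else (0::real))"
  have cvchi: "cv C X b = chi (src C b) - chi (dst C b)" for b
    unfolding cv_def cut_def chi_def by auto
  have tm: "(if src C (es!j) = vs!j then 1 else -1) * cv C X (es!j) = chi (vs!j) - chi (vs!((j+1) mod length es))"
    if "j < length es" for j
  proof -
    have "src C (es ! j) = vs ! j \<and> dst C (es ! j) = vs ! ((j + 1) mod length es) \<or>
          dst C (es ! j) = vs ! j \<and> src C (es ! j) = vs ! ((j + 1) mod length es)"
      using assms that unfolding is_cycle_def by blast
    then show ?thesis unfolding cvchi by auto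
  qed
  have "(\<Sum>b\<in>UNIV. lv C vs es b * cv C X b) = (\<Sum>j<length es. chi (vs!j) - chi (vs!((j+1) mod length es)))"
    unfolding lv_dot using tm by (intro sum.cong) auto
  also have "\<dots> = 0" using assms unfolding is_cycle_def by (intro tele) auto
  finally show ?thesis .
qed

lemma orth_vecs:
  assumes "loop_vec C w" "cutset_vec C c"
  shows "(\<Sum>b\<in>UNIV. w b * c b) = 0"
  using assms orth unfolding loop_vec_lv cutset_vec_cv by blast

lemma incr_empty: "\<not> increases_comp C {}"
  unfolding increases_comp_def by simp

lemma reach_add_edge:
  assumes "reach C (UNIV - S) (src C f) (dst C f)"
  shows "reach C (UNIV - (S - {f})) u v = reach C (UNIV - S) u v"
proof
  assume r: "reach C (UNIV - (S - {f})) u v"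
  have "\<forall>b\<in>(UNIV - (S - {f})) - (UNIV - S). reach C (UNIV - S) (src C b) (dst C b)"
    using assms by auto
  then show "reach C (UNIV - S) u v" using reach_subst[OF _ _ r] by blast
next
  assume "reach C (UNIV - S) u v"
  then show "reach C (UNIV - (S - {f})) u v" by (rule reach_mono[rotated]) auto
qed

lemma cut_closed:
  assumes "u \<in> X" "adj C (UNIV - cut C X) u w"
  shows "w \<in> X"
  using assms unfolding adj_def cut_def by auto

lemma cutset_cut:
  fixes C :: "('n::finite, 'b::finite) circuit"
  assumes "is_cutset C S"
  shows "\<exists>X. S = cut C X"
proof -
  have inc: "increases_comp C S" and mn: "\<forall>S'. S' \<subset> S \<longrightarrow> \<not> increases_comp C S'"
    using assms unfolding is_cutset_def by auto
  have "S \<noteq> {}" using inc incr_empty by blast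
  then obtain f where f: "f \<in> S" by blast
  have nr: "\<not> reach C (UNIV - S) (src C g) (dst C g)" if g: "g \<in> S" for g
  proof
    assume r: "reach C (UNIV - S) (src C g) (dst C g)"
    have "ncomp C (UNIV - (S - {g})) = ncomp C (UNIV - S)"
      by (rule ncomp_eq) (rule reach_add_edge[OF r])
    then have "increases_comp C (S - {g})" using inc unfolding increases_comp_def by simp
    moreover have "S - {g} \<subset> S" using g by auto
    ultimately show False using mn by blast
  qed
  define X where "X = {u. reach C (UNIV - S) (src C f) u}"
  have sub: "cut C X \<subseteq> S"
  proof
    fix b assume b: "b \<in> cut C X"
    show "b \<in> S"
    proof (rule ccontr)
      assume "b \<notin> S"
      then have "reach C (UNIV - S) (src C b) (dst C b)" "reach C (UNIV - S) (dst C b) (src C b)"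
        using reach_edge reach_edge' by (metis Diff_iff UNIV_I)+
      then show False using b unfolding cut_def X_def by (auto intro: reach_trans)
    qed
  qed
  have "\<not> reach C (UNIV - cut C X) (src C f) (dst C f)"
  proof
    assume "reach C (UNIV - cut C X) (src C f) (dst C f)"
    moreover have "src C f \<in> X" unfolding X_def by simp
    ultimately have "dst C f \<in> X" using reach_closed[of X C "UNIV - cut C X"] cut_closed by metis
    then show False using nr[OF f] unfolding X_def by simp
  qed
  then have "increases_comp C (cut C X)"
    unfolding increases_comp_def by (intro ncomp_less[of _ UNIV _ "src C f" "dst C f"]) (auto intro: reach_edge)
  then have "cut C X = S" using mn sub by blast
  then show ?thesis by blast
qed

lemma L3core:
  fixes C :: "('n::finite, 'b::finite) circuit"
  assumes "v e \<noteq> 0" "\<forall>w. loop_vec C w \<longrightarrow> (\<Sum>b\<in>UNIV. w b * v b) = 0"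
  shows "\<exists>S. is_cutset C S \<and> S \<subseteq> {b. v b \<noteq> 0}"
proof -
  define F where "F = {b. v b \<noteq> 0}"
  have eF: "e \<in> F" using assms(1) F_def by simp
  have nr: "\<not> reach C (UNIV - F) (dst C e) (src C e)"
  proof
    assume "reach C (UNIV - F) (dst C e) (src C e)"
    from cycle_through[OF _ this] eF obtain vs es where
      c: "is_cycle C vs es" "es!0 = e" "vs!0 = src C e" "set es \<subseteq> insert e (UNIV - F)" by auto
    have d: "distinct es" and ne: "es \<noteq> []" using c(1) unfolding is_cycle_def by auto
    have "(\<Sum>b\<in>UNIV. lv C vs es b * v b) = 0" using assms(2) c(1) unfolding loop_vec_lv by blast
    moreover have "(\<Sum>b\<in>UNIV. lv C vs es b * v b) = (\<Sum>j<length es. if j = 0 then v e else 0)"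
      unfolding lv_dot
    proof (intro sum.cong refl)
      fix j assume j: "j \<in> {..<length es}"
      show "(if src C (es!j) = vs!j then 1 else -1) * v (es!j) = (if j = 0 then v e else 0)"
      proof (cases "j = 0")
        case True then show ?thesis using c by simp
      next
        case False
        then have "es!j \<noteq> es!0" using d j ne by (simp add: nth_eq_iff_index_eq)
        moreover have "es!j \<in> insert e (UNIV - F)" using c(4) j nth_mem by fastforce
        ultimately have "es!j \<in> UNIV - F" using c(2) by auto
        then have "v (es!j) = 0" by (simp add: F_def)
        then show ?thesis using False by simp
      qed
    qed
    moreover have "(\<Sum>j<length es. if j = 0 then v e else 0) = v e" using ne by (simp add: sum.delta)
    ultimately show False using assms(1) by simp
  qed
  have "increases_comp C F"
    unfolding increases_comp_def
    by (rule ncomp_less[of _ UNIV _ "dst C e" "src C e"]) (use nr in \<open>auto intro: reach_edge'\<close>)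
  from min_subset[of F "increases_comp C", OF _ this] obtain S where
    "S \<subseteq> F" "increases_comp C S" "\<forall>S'. S' \<subset> S \<longrightarrow> \<not> increases_comp C S'" by auto
  then show ?thesis unfolding is_cutset_def F_def by blast
qed

lemma one_end:
  assumes f: "f \<in> S" and nr: "\<not> reach C (UNIV - S) r r'"
    and r: "reach C (UNIV - (S - {f})) r r'"
  shows "(src C f \<in> {u. reach C (UNIV - S) r u}) \<noteq> (dst C f \<in> {u. reach C (UNIV - S) r u})"
proof
  define A where "A = {u. reach C (UNIV - S) r u}"
  assume eq: "(src C f \<in> {u. reach C (UNIV - S) r u}) = (dst C f \<in> {u. reach C (UNIV - S) r u})"
  then have eqA: "(src C f \<in> A) = (dst C f \<in> A)" unfolding A_def .
  have cl: "w \<in> A" if u: "u \<in> A" and a: "adj C (UNIV - (S - {f})) u w" for u w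
  proof -
    from a obtain g where g: "g \<in> UNIV - (S - {f})"
      "(src C g = u \<and> dst C g = w) \<or> (src C g = w \<and> dst C g = u)" unfolding adj_def by blast
    show ?thesis
    proof (cases "g = f")
      case True then show ?thesis using g(2) eqA u by auto
    next
      case False
      then have "adj C (UNIV - S) u w" using g unfolding adj_def by auto
      then show ?thesis using u unfolding A_def by (auto intro: rtranclp.rtrancl_into_rtrancl)
    qed
  qed
  have "r \<in> A" unfolding A_def by simp
  have "r' \<in> A" using r \<open>r \<in> A\<close> by (induction rule: rtranclp_induct) (auto intro: cl)
  then show False using nr unfolding A_def by simp
qed

lemma min_sep:
  fixes C :: "('n::finite, 'b::finite) circuit"
  assumes sep: "\<not> reach C (UNIV - S) s t"
    and mn: "\<forall>S''. S'' \<subset> S \<longrightarrow> reach C (UNIV - S'') s t"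
    and st: "reach C UNIV s t"
  shows "S = cut C {u. reach C (UNIV - S) s u}" "is_cutset C S"
proof -
  define A where "A = {u. reach C (UNIV - S) s u}"
  define B where "B = {u. reach C (UNIV - S) t u}"
  have sep': "\<not> reach C (UNIV - S) t s" using sep reach_sym by metis
  have endA: "(src C f \<in> A) \<noteq> (dst C f \<in> A)" if f: "f \<in> S" for f
  proof -
    have "reach C (UNIV - (S - {f})) s t" using mn f by auto
    then show ?thesis using one_end[OF f sep] unfolding A_def by blast
  qed
  have endB: "(src C f \<in> B) \<noteq> (dst C f \<in> B)" if f: "f \<in> S" for f
  proof -
    have "reach C (UNIV - (S - {f})) s t" using mn f by auto
    then have "reach C (UNIV - (S - {f})) t s" by (rule reach_sym)
    then show ?thesis using one_end[OF f sep'] unfolding B_def by blast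
  qed
  have disj: "u \<notin> A \<or> u \<notin> B" for u
  proof (rule ccontr)
    assume "\<not> (u \<notin> A \<or> u \<notin> B)"
    then have h1: "reach C (UNIV - S) s u" and h2: "reach C (UNIV - S) t u" unfolding A_def B_def by auto
    have "reach C (UNIV - S) s t" by (rule reach_trans[OF h1 reach_sym[OF h2]])
    then show False using sep by simp
  qed
  have ends: "(src C f \<in> A \<and> dst C f \<in> B) \<or> (src C f \<in> B \<and> dst C f \<in> A)" if "f \<in> S" for f
    using endA[OF that] endB[OF that] disj[of "src C f"] disj[of "dst C f"] by auto
  have sub1: "S \<subseteq> cut C A" using endA unfolding cut_def by auto
  have sub2: "cut C A \<subseteq> S"
  proof
    fix b assume b: "b \<in> cut C A"
    show "b \<in> S"
    proof (rule ccontr)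
      assume "b \<notin> S"
      then have "reach C (UNIV - S) (src C b) (dst C b)" "reach C (UNIV - S) (dst C b) (src C b)"
        using reach_edge reach_edge' by (metis Diff_iff UNIV_I)+
      then show False using b unfolding cut_def A_def by (auto intro: reach_trans)
    qed
  qed
  show "S = cut C {u. reach C (UNIV - S) s u}" using sub1 sub2 unfolding A_def by blast
  have inc: "increases_comp C S"
    unfolding increases_comp_def by (rule ncomp_less[OF _ st sep]) auto
  have "\<not> increases_comp C S''" if ss: "S'' \<subset> S" for S''
  proof -
    obtain g where g: "g \<in> S" "g \<notin> S''" using ss by blast
    have AB: "reach C (UNIV - S'') x y" if "x \<in> A" "y \<in> B" for x y
    proof -
      have m: "UNIV - S \<subseteq> UNIV - S''" using ss by auto
      have gg: "reach C (UNIV - S'') (src C g) (dst C g)" "reach C (UNIV - S'') (dst C g) (src C g)"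
        using g(2) reach_edge reach_edge' by (metis Diff_iff UNIV_I)+
      have sa: "reach C (UNIV - S'') s a" if "a \<in> A" for a
        using that unfolding A_def by (simp add: reach_mono[OF m])
      have tb: "reach C (UNIV - S'') t b" if "b \<in> B" for b
        using that unfolding B_def by (simp add: reach_mono[OF m])
      have bt: "reach C (UNIV - S'') b t" if "b \<in> B" for b by (rule reach_sym[OF tb[OF that]])
      have sx: "reach C (UNIV - S'') x s" by (rule reach_sym[OF sa[OF that(1)]])
      have ty: "reach C (UNIV - S'') t y" by (rule tb[OF that(2)])
      from ends[OF g(1)] have "reach C (UNIV - S'') s t"
      proof
        assume h: "src C g \<in> A \<and> dst C g \<in> B"
        show ?thesis by (rule reach_trans[OF reach_trans[OF sa[OF conjunct1[OF h]] gg(1)] bt[OF conjunct2[OF h]]])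
      next
        assume h: "src C g \<in> B \<and> dst C g \<in> A"
        show ?thesis by (rule reach_trans[OF reach_trans[OF sa[OF conjunct2[OF h]] gg(2)] bt[OF conjunct1[OF h]]])
      qed
      then show ?thesis by (rule reach_trans[OF reach_trans[OF sx] ty])
    qed
    have "\<forall>b\<in>UNIV - (UNIV - S''). reach C (UNIV - S'') (src C b) (dst C b)"
    proof
      fix b assume "b \<in> UNIV - (UNIV - S'')"
      then have "b \<in> S" using ss by auto
      from ends[OF this] show "reach C (UNIV - S'') (src C b) (dst C b)"
      proof
        assume "src C b \<in> A \<and> dst C b \<in> B"
        then show ?thesis using AB by simp
      next
        assume "src C b \<in> B \<and> dst C b \<in> A"
        then have "reach C (UNIV - S'') (dst C b) (src C b)" using AB by simp
        then show ?thesis by (rule reach_sym)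
      qed
    qed
    then have "reach C UNIV u v = reach C (UNIV - S'') u v" for u v
    proof -
      assume h: "\<forall>b\<in>UNIV - (UNIV - S''). reach C (UNIV - S'') (src C b) (dst C b)"
      show ?thesis
      proof
        assume r: "reach C UNIV u v"
        show "reach C (UNIV - S'') u v" by (rule reach_subst[OF _ h r]) simp
      next
        assume "reach C (UNIV - S'') u v"
        then show "reach C UNIV u v" by (rule reach_mono[rotated]) simp
      qed
    qed
    then have "ncomp C UNIV = ncomp C (UNIV - S'')" by (rule ncomp_eq)
    then show ?thesis unfolding increases_comp_def by simp
  qed
  then show "is_cutset C S" unfolding is_cutset_def using inc by blast
qed

lemma L2core:
  fixes C :: "('n::finite, 'b::finite) circuit"
  assumes "v e \<noteq> 0" "\<forall>w. cutset_vec C w \<longrightarrow> (\<Sum>b\<in>UNIV. w b * v b) = 0"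
  shows "\<exists>L. is_loop C L \<and> L \<subseteq> {b. v b \<noteq> 0}"
proof -
  define F where "F = {b. v b \<noteq> 0}"
  have eF: "e \<in> F" using assms(1) F_def by simp
  show ?thesis
  proof (cases "reach C (F - {e}) (dst C e) (src C e)")
    case True
    from cycle_through[OF _ True] obtain vs es where
      c: "is_cycle C vs es" "set es \<subseteq> insert e (F - {e})" by auto
    have "is_loop C (set es)" using c(1) unfolding is_loop_def by blast
    moreover have "set es \<subseteq> F" using c(2) eF by auto
    ultimately show ?thesis unfolding F_def by blast
  next
    case False
    define s where "s = src C e"
    define t where "t = dst C e"
    define sep where "sep = (\<lambda>S. \<not> reach C (UNIV - S) s t)"
    have "sep (UNIV - (F - {e}))"
      unfolding sep_def s_def t_def using False reach_sym by (metis Diff_Diff_Int inf_top_left)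
    from min_subset[of "UNIV - (F - {e})" sep, OF _ this] obtain S where
      S: "S \<subseteq> UNIV - (F - {e})" "sep S" "\<forall>S'. S' \<subset> S \<longrightarrow> \<not> sep S'" by auto
    have st: "reach C UNIV s t" unfolding s_def t_def by (rule reach_edge) simp
    have ms: "S = cut C {u. reach C (UNIV - S) s u}" "is_cutset C S"
      using min_sep[of C S s t] S st unfolding sep_def by auto
    define X where "X = {u. reach C (UNIV - S) s u}"
    have cvv: "cutset_vec C (cv C X)" unfolding cutset_vec_cv using ms X_def by metis
    have eS: "e \<in> S"
    proof (rule ccontr)
      assume "e \<notin> S"
      then have "reach C (UNIV - S) s t" unfolding s_def t_def by (intro reach_edge) simp
      then show False using S(2) sep_def by simp
    qed
    have "(\<Sum>b\<in>UNIV. cv C X b * v b) = (\<Sum>b\<in>UNIV. if b = e then cv C X e * v e else 0)"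
    proof (intro sum.cong refl)
      fix b
      show "cv C X b * v b = (if b = e then cv C X e * v e else 0)"
      proof (cases "b = e")
        case False
        show ?thesis
        proof (cases "b \<in> S")
          case True
          then have "b \<notin> F" using S(1) False by auto
          then show ?thesis using False F_def by simp
        next
          case f2: False
          then have "b \<notin> cut C X" using ms X_def by auto
          then show ?thesis using False unfolding cv_def by simp
        qed
      qed simp
    qed
    also have "\<dots> = cv C X e * v e" by simp
    finally have "(\<Sum>b\<in>UNIV. cv C X b * v b) = cv C X e * v e" .
    moreover have "cv C X e \<noteq> 0" using eS ms X_def unfolding cv_def by auto
    ultimately have "(\<Sum>b\<in>UNIV. cv C X b * v b) \<noteq> 0" using assms(1) by simp
    then show ?thesis using assms(2) cvv by blast
  qed
qed

lemma tellegen: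
  fixes C :: "('n::finite, 'b::finite) circuit"
  assumes "\<forall>w. loop_vec C w \<longrightarrow> (\<Sum>b\<in>UNIV. w b * v b) = 0"
    and ci: "\<forall>c. cutset_vec C c \<longrightarrow> (\<Sum>b\<in>UNIV. c b * i b) = 0"
  shows "(\<Sum>b\<in>UNIV. v b * i b) = 0"
  using assms(1)
proof (induction "card {b. v b \<noteq> 0}" arbitrary: v rule: less_induct)
  case less
  show ?case
  proof (cases "\<forall>b. v b = 0")
    case True then show ?thesis by simp
  next
    case False
    then obtain e where e: "v e \<noteq> 0" by blast
    from L3core[OF e less.prems] obtain S where S: "is_cutset C S" "S \<subseteq> {b. v b \<noteq> 0}" by blast
    from cutset_cut[OF S(1)] obtain X where X: "S = cut C X" by blast
    have cvv: "cutset_vec C (cv C X)" unfolding cutset_vec_cv using S X by blast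
    have "S \<noteq> {}" using S(1) incr_empty unfolding is_cutset_def by blast
    then obtain f where f: "f \<in> S" by blast
    have cf: "cv C X f \<noteq> 0" using f X unfolding cv_def by auto
    define lam where "lam = v f / cv C X f"
    define v' where "v' = (\<lambda>b. v b - lam * cv C X b)"
    have sub: "{b. v' b \<noteq> 0} \<subseteq> {b. v b \<noteq> 0} - {f}"
    proof
      fix b assume b: "b \<in> {b. v' b \<noteq> 0}"
      have "b \<noteq> f" using b cf unfolding v'_def lam_def by auto
      moreover have "v b \<noteq> 0"
      proof (rule ccontr)
        assume "\<not> v b \<noteq> 0"
        then have "cv C X b \<noteq> 0" using b unfolding v'_def by auto
        then have "b \<in> S" using X unfolding cv_def by (auto split: if_splits)
        then show False using S(2) \<open>\<not> v b \<noteq> 0\<close> by auto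
      qed
      ultimately show "b \<in> {b. v b \<noteq> 0} - {f}" by simp
    qed
    have "card {b. v' b \<noteq> 0} < card {b. v b \<noteq> 0}"
    proof -
      have "card {b. v' b \<noteq> 0} \<le> card ({b. v b \<noteq> 0} - {f})" using sub by (intro card_mono) auto
      also have "\<dots> < card {b. v b \<noteq> 0}" using f S(2) by (intro card_Diff1_less) auto
      finally show ?thesis .
    qed
    moreover have "\<forall>w. loop_vec C w \<longrightarrow> (\<Sum>b\<in>UNIV. w b * v' b) = 0"
    proof (intro allI impI)
      fix w assume w: "loop_vec C w"
      have "(\<Sum>b\<in>UNIV. w b * v' b) = (\<Sum>b\<in>UNIV. w b * v b) - lam * (\<Sum>b\<in>UNIV. w b * cv C X b)"
        unfolding v'_def by (simp add: algebra_simps sum_subtractf sum_distrib_left)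
      also have "\<dots> = 0" using less.prems w orth_vecs[OF w cvv] by simp
      finally show "(\<Sum>b\<in>UNIV. w b * v' b) = 0" .
    qed
    ultimately have "(\<Sum>b\<in>UNIV. v' b * i b) = 0" using less.hyps by blast
    moreover have "(\<Sum>b\<in>UNIV. v b * i b) = (\<Sum>b\<in>UNIV. v' b * i b) + lam * (\<Sum>b\<in>UNIV. cv C X b * i b)"
      unfolding v'_def by (simp add: algebra_simps sum_subtractf sum_distrib_left)
    ultimately show ?thesis using ci cvv by simp
  qed
qed

definition dQ :: "'b::finite set \<Rightarrow> 'b cvar \<Rightarrow> real^'b" where
  "dQ S u = (\<chi> b. if b \<in> S \<and> u = VQ b then 1 else 0)"
definition dPh :: "'b::finite set \<Rightarrow> 'b cvar \<Rightarrow> real^'b" where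
  "dPh S u = (\<chi> b. if b \<in> S \<and> u = VPh b then 1 else 0)"
definition dV :: "'b::finite set \<Rightarrow> 'b cvar \<Rightarrow> real^'b" where
  "dV S u = (\<chi> b. if b \<in> S \<and> u = VV b then 1 else 0)"
definition dI :: "'b::finite set \<Rightarrow> 'b cvar \<Rightarrow> real^'b" where
  "dI S u = (\<chi> b. if b \<in> S \<and> u = VI b then 1 else 0)"

lemma upd_qv: "qv S (x(u := x u + s)) = qv S x + s *\<^sub>R dQ S u"
  unfolding qv_def dQ_def by (auto simp: vec_eq_iff)
lemma upd_phv: "phv S (x(u := x u + s)) = phv S x + s *\<^sub>R dPh S u"
  unfolding phv_def dPh_def by (auto simp: vec_eq_iff)
lemma upd_vv: "vv S (x(u := x u + s)) = vv S x + s *\<^sub>R dV S u"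
  unfolding vv_def dV_def by (auto simp: vec_eq_iff)
lemma upd_iv: "iv S (x(u := x u + s)) = iv S x + s *\<^sub>R dI S u"
  unfolding iv_def dI_def by (auto simp: vec_eq_iff)

lemma dQ_simps[simp]: "dQ S (VQ b') = (if b' \<in> S then axis b' 1 else 0)" "dQ S (VPh b') = 0"
  "dQ S (VV b') = 0" "dQ S (VI b') = 0"
  by (auto simp: dQ_def vec_eq_iff axis_def)
lemma dPh_simps[simp]: "dPh S (VPh b') = (if b' \<in> S then axis b' 1 else 0)" "dPh S (VQ b') = 0"
  "dPh S (VV b') = 0" "dPh S (VI b') = 0"
  by (auto simp: dPh_def vec_eq_iff axis_def)
lemma dV_simps[simp]: "dV S (VV b') = (if b' \<in> S then axis b' 1 else 0)" "dV S (VQ b') = 0"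
  "dV S (VPh b') = 0" "dV S (VI b') = 0"
  by (auto simp: dV_def vec_eq_iff axis_def)
lemma dI_simps[simp]: "dI S (VI b') = (if b' \<in> S then axis b' 1 else 0)" "dI S (VQ b') = 0"
  "dI S (VPh b') = 0" "dI S (VV b') = 0"
  by (auto simp: dI_def vec_eq_iff axis_def)

lemma C1_hasd: "C1_map f \<Longrightarrow> (f has_derivative frechet_derivative f (at z)) (at z)"
  unfolding C1_map_def using frechet_derivative_works differentiable_def by blast

lemma dir_deriv:
  fixes F :: "'a::real_normed_vector \<Rightarrow> real^'b::finite"
  assumes "(F has_derivative D) (at z)"
  shows "((\<lambda>s. F (z + s *\<^sub>R a) $ b) has_field_derivative (D a $ b)) (at 0)"
proof -
  have 1: "((\<lambda>s. z + s *\<^sub>R a) has_derivative (\<lambda>h. h *\<^sub>R a)) (at 0)"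
    by (auto intro!: derivative_eq_intros)
  have 2: "(F has_derivative D) (at (z + 0 *\<^sub>R a))" using assms by simp
  have 3: "((\<lambda>s. F (z + s *\<^sub>R a)) has_derivative (\<lambda>h. D (h *\<^sub>R a))) (at 0)"
    by (rule has_derivative_compose[OF 1 2])
  have 4: "((\<lambda>s. F (z + s *\<^sub>R a) $ b) has_derivative (\<lambda>h. D (h *\<^sub>R a) $ b)) (at 0)"
    by (rule bounded_linear.has_derivative[OF bounded_linear_vec_nth 3])
  have lin: "bounded_linear D" by (rule has_derivative_bounded_linear[OF assms])
  show ?thesis
    by (rule has_derivative_imp_has_field_derivative[OF 4])
      (simp add: linear_scale[OF bounded_linear.linear[OF lin]] mult.commute)
qed

lemma deriv_lin: "deriv (\<lambda>s. c + k * s) 0 = (k::real)"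
  by (rule DERIV_imp_deriv) (auto intro!: derivative_eq_intros)

lemma row_deriv:
  fixes G :: "'a::real_normed_vector \<Rightarrow> real^'b::finite"
  assumes "(G has_derivative D) (at z)" "\<And>s. f s = c + k * s - G (z + s *\<^sub>R a) $ b"
  shows "deriv f 0 = k - D a $ b"
proof -
  have "f = (\<lambda>s. c + k * s - G (z + s *\<^sub>R a) $ b)" using assms(2) by auto
  moreover have "((\<lambda>s. c + k * s - G (z + s *\<^sub>R a) $ b) has_field_derivative (k - D a $ b)) (at 0)"
    using dir_deriv[OF assms(1), of a b] by (auto intro!: derivative_eq_intros)
  ultimately show ?thesis by (simp add: DERIV_imp_deriv)
qed

lemma row_deriv_const:
  assumes "\<And>s. f s = c + k * s"
  shows "deriv f 0 = (k::real)"
proof -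
  have "f = (\<lambda>s. c + k * s)" using assms by auto
  then show ?thesis by (simp add: deriv_lin)
qed

lemma upd_val: "(x(u := x u + s)) w = x w + (if w = u then 1 else 0) * (s::real)"
  by simp

lemma K_EQ: "Kmat C t x (EQ b) u = (if u = VI b then 1 else 0)"
  unfolding Kmat_def
  by (rule row_deriv_const[where c = "x (VI b)"]) (auto simp: rhs_def)

lemma K_EPh: "Kmat C t x (EPh b) u = (if u = VV b then 1 else 0)"
  unfolding Kmat_def
  by (rule row_deriv_const[where c = "x (VV b)"]) (auto simp: rhs_def)

lemma sum_lin_upd:
  fixes A :: "'b::finite \<Rightarrow> real"
  shows "(\<Sum>b\<in>UNIV. A b * (x(u := x u + s)) (K b)) =
    (\<Sum>b\<in>UNIV. A b * x (K b)) + (\<Sum>b\<in>UNIV. A b * (if K b = u then 1 else 0)) * s"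
proof -
  have "\<And>b. A b * (x(u := x u + s)) (K b) = A b * x (K b) + (A b * (if K b = u then 1 else 0)) * s"
    by (simp add: algebra_simps)
  then show ?thesis by (simp add: sum.distrib sum_distrib_right)
qed

lemma K_EB: "Kmat C t x (EB r) u = (case u of VV b \<Rightarrow> Bm C r b | _ \<Rightarrow> 0)"
proof -
  have "Kmat C t x (EB r) u = (\<Sum>b\<in>UNIV. Bm C r b * (if VV b = u then 1 else 0))"
    unfolding Kmat_def by (rule row_deriv_const, unfold rhs_def ceq.case sum_lin_upd, rule refl)
  also have "\<dots> = (case u of VV b \<Rightarrow> Bm C r b | _ \<Rightarrow> 0)"
    by (cases u) (simp_all add: if_distrib[of "\<lambda>c. _ * c"] cong: if_cong)
  finally show ?thesis .
qed

lemma K_ED: "Kmat C t x (ED r) u = (case u of VI b \<Rightarrow> Dm C r b | _ \<Rightarrow> 0)"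
proof -
  have "Kmat C t x (ED r) u = (\<Sum>b\<in>UNIV. Dm C r b * (if VI b = u then 1 else 0))"
    unfolding Kmat_def by (rule row_deriv_const, unfold rhs_def ceq.case sum_lin_upd, rule refl)
  also have "\<dots> = (case u of VI b \<Rightarrow> Dm C r b | _ \<Rightarrow> 0)"
    by (cases u) (simp_all add: if_distrib[of "\<lambda>c. _ * c"] cong: if_cong)
  finally show ?thesis .
qed

definition "DG1 C t x = frechet_derivative (\<lambda>(q, i, t). eta1 C q i t) (at (qv (cset C QMem) x, iv (cset C QMem) x, t))"
definition "DG2 C t x = frechet_derivative (\<lambda>(q, t). eta2 C q t) (at (qv (cset C Cap) x, t))"
definition "DG3 C t x = frechet_derivative (\<lambda>(i, t). eta3 C i t) (at (iv (cset C CCR) x, t))"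
definition "DZ1 C t x = frechet_derivative (\<lambda>(p, v, t). zeta1 C p v t) (at (phv (cset C PhiMem) x, vv (cset C PhiMem) x, t))"
definition "DZ2 C t x = frechet_derivative (\<lambda>(p, t). zeta2 C p t) (at (phv (cset C Ind) x, t))"
definition "DZ3 C t x = frechet_derivative (\<lambda>(v, t). zeta3 C v t) (at (vv (cset C VCR) x, t))"

lemma hd_all:
  assumes "admissible_circuit C"
  shows "((\<lambda>(q, i, t). eta1 C q i t) has_derivative DG1 C t x) (at (qv (cset C QMem) x, iv (cset C QMem) x, t))"
    "((\<lambda>(q, t). eta2 C q t) has_derivative DG2 C t x) (at (qv (cset C Cap) x, t))"
    "((\<lambda>(i, t). eta3 C i t) has_derivative DG3 C t x) (at (iv (cset C CCR) x, t))"
    "((\<lambda>(p, v, t). zeta1 C p v t) has_derivative DZ1 C t x) (at (phv (cset C PhiMem) x, vv (cset C PhiMem) x, t))"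
    "((\<lambda>(p, t). zeta2 C p t) has_derivative DZ2 C t x) (at (phv (cset C Ind) x, t))"
    "((\<lambda>(v, t). zeta3 C v t) has_derivative DZ3 C t x) (at (vv (cset C VCR) x, t))"
  using assms unfolding admissible_circuit_def DG1_def DG2_def DG3_def DZ1_def DZ2_def DZ3_def
  by (auto intro: C1_hasd)

lemma K_EV_QM:
  assumes "admissible_circuit C" "cls C b = QMem"
  shows "Kmat C t x (EV b) u = (if VV b = u then 1 else 0) - DG1 C t x (dQ (cset C QMem) u, dI (cset C QMem) u, 0) $ b"
  unfolding Kmat_def
  by (rule row_deriv[OF hd_all(1)[OF assms(1)], where c = "x (VV b)"])
    (simp add: rhs_def fq_def assms(2) upd_qv upd_iv)

lemma K_EV_Cap:
  assumes "admissible_circuit C" "cls C b = Cap"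
  shows "Kmat C t x (EV b) u = (if VV b = u then 1 else 0) - DG2 C t x (dQ (cset C Cap) u, 0) $ b"
  unfolding Kmat_def
  by (rule row_deriv[OF hd_all(2)[OF assms(1)], where c = "x (VV b)"])
    (simp add: rhs_def fq_def assms(2) upd_qv)

lemma K_EV_CCR:
  assumes "admissible_circuit C" "cls C b = CCR"
  shows "Kmat C t x (EV b) u = (if VV b = u then 1 else 0) - DG3 C t x (dI (cset C CCR) u, 0) $ b"
  unfolding Kmat_def
  by (rule row_deriv[OF hd_all(3)[OF assms(1)], where c = "x (VV b)"])
    (simp add: rhs_def fq_def assms(2) upd_iv)

lemma K_EV_VSrc:
  assumes "cls C b = VSrc"
  shows "Kmat C t x (EV b) u = (if VV b = u then 1 else 0)"
  unfolding Kmat_def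
  by (rule row_deriv_const[where c = "x (VV b) - eta4 C t $ b"])
    (simp add: rhs_def fq_def assms)

lemma K_EI_PM:
  assumes "admissible_circuit C" "cls C b = PhiMem"
  shows "Kmat C t x (EI b) u = (if VI b = u then 1 else 0) - DZ1 C t x (dPh (cset C PhiMem) u, dV (cset C PhiMem) u, 0) $ b"
  unfolding Kmat_def
  by (rule row_deriv[OF hd_all(4)[OF assms(1)], where c = "x (VI b)"])
    (simp add: rhs_def gphi_def assms(2) upd_phv upd_vv)

lemma K_EI_Ind:
  assumes "admissible_circuit C" "cls C b = Ind"
  shows "Kmat C t x (EI b) u = (if VI b = u then 1 else 0) - DZ2 C t x (dPh (cset C Ind) u, 0) $ b"
  unfolding Kmat_def
  by (rule row_deriv[OF hd_all(5)[OF assms(1)], where c = "x (VI b)"])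
    (simp add: rhs_def gphi_def assms(2) upd_phv)

lemma K_EI_VCR:
  assumes "admissible_circuit C" "cls C b = VCR"
  shows "Kmat C t x (EI b) u = (if VI b = u then 1 else 0) - DZ3 C t x (dV (cset C VCR) u, 0) $ b"
  unfolding Kmat_def
  by (rule row_deriv[OF hd_all(6)[OF assms(1)], where c = "x (VI b)"])
    (simp add: rhs_def gphi_def assms(2) upd_vv)

lemma K_EI_ISrc:
  assumes "cls C b = ISrc"
  shows "Kmat C t x (EI b) u = (if VI b = u then 1 else 0)"
  unfolding Kmat_def
  by (rule row_deriv_const[where c = "x (VI b) - zeta4 C t $ b"])
    (simp add: rhs_def gphi_def assms)

lemma fd_link:
  assumes "(G has_derivative D) (at (g z0))" "(g has_derivative g') (at z0)" "\<And>z. F z = G (g z)"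
  shows "frechet_derivative F (at z0) h = D (g' h)"
proof -
  have "F = (\<lambda>z. G (g z))" using assms(3) by auto
  moreover have "((\<lambda>z. G (g z)) has_derivative (\<lambda>h. D (g' h))) (at z0)"
    by (rule has_derivative_compose[OF assms(2) assms(1)])
  ultimately have "(\<lambda>h. D (g' h)) = frechet_derivative F (at z0)" using frechet_derivative_at by blast
  then show ?thesis by metis
qed

lemma lin0: "(G has_derivative D) F \<Longrightarrow> D 0 = 0"
  using linear_0[OF bounded_linear.linear[OF has_derivative_bounded_linear]] by blast

lemma Em_link:
  assumes "admissible_circuit C"
  shows "Em C t x b b' = DG1 C t x (axis b' 1, 0, 0) $ b"
  unfolding Em_def jac_def
  by (subst fd_link[where g = "\<lambda>q. (q, iv (cset C QMem) x, t)", OF hd_all(1)[OF assms, of t x]])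
    (auto intro!: derivative_eq_intros simp: zero_prod_def)

lemma Ec_link:
  assumes "admissible_circuit C"
  shows "Ec C t x b b' = DG2 C t x (axis b' 1, 0) $ b"
  unfolding Ec_def jac_def
  by (subst fd_link[where g = "\<lambda>q. (q, t)", OF hd_all(2)[OF assms, of t x]])
    (auto intro!: derivative_eq_intros)

lemma Rw_link:
  assumes "admissible_circuit C"
  shows "Rw C t x b b' = DZ1 C t x (axis b' 1, 0, 0) $ b"
  unfolding Rw_def jac_def
  by (subst fd_link[where g = "\<lambda>q. (q, vv (cset C PhiMem) x, t)", OF hd_all(4)[OF assms, of t x]])
    (auto intro!: derivative_eq_intros simp: zero_prod_def)

lemma Rl_link:
  assumes "admissible_circuit C"
  shows "Rl C t x b b' = DZ2 C t x (axis b' 1, 0) $ b"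
  unfolding Rl_def jac_def
  by (subst fd_link[where g = "\<lambda>q. (q, t)", OF hd_all(5)[OF assms, of t x]])
    (auto intro!: derivative_eq_intros)

lemma iv_mask: "iv S x = maskv S (\<chi> b. x (VI b))"
  unfolding iv_def maskv_def by (simp add: vec_eq_iff)
lemma vv_mask: "vv S x = maskv S (\<chi> b. x (VV b))"
  unfolding vv_def maskv_def by (simp add: vec_eq_iff)

lemma R_link:
  assumes "admissible_circuit C" "R_posdef C"
  shows "posdef (cset C CCR) (\<lambda>b b'. DG3 C t x (axis b' 1, 0) $ b)"
proof -
  have "posdef (cset C CCR) (jac (\<lambda>i'. eta3 C i' t) (iv (cset C CCR) x))"
    using assms(2) unfolding R_posdef_def iv_mask by blast
  moreover have "jac (\<lambda>i'. eta3 C i' t) (iv (cset C CCR) x) = (\<lambda>b b'. DG3 C t x (axis b' 1, 0) $ b)"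
    unfolding jac_def
    by (intro ext, subst fd_link[where g = "\<lambda>q. (q, t)", OF hd_all(3)[OF assms(1), of t x]])
      (auto intro!: derivative_eq_intros)
  ultimately show ?thesis by simp
qed

lemma G_link:
  assumes "admissible_circuit C" "G_posdef C"
  shows "posdef (cset C VCR) (\<lambda>b b'. DZ3 C t x (axis b' 1, 0) $ b)"
proof -
  have "posdef (cset C VCR) (jac (\<lambda>v'. zeta3 C v' t) (vv (cset C VCR) x))"
    using assms(2) unfolding G_posdef_def vv_mask by blast
  moreover have "jac (\<lambda>v'. zeta3 C v' t) (vv (cset C VCR) x) = (\<lambda>b b'. DZ3 C t x (axis b' 1, 0) $ b)"
    unfolding jac_def
    by (intro ext, subst fd_link[where g = "\<lambda>q. (q, t)", OF hd_all(6)[OF assms(1), of t x]])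
      (auto intro!: derivative_eq_intros)
  ultimately show ?thesis by simp
qed

lemma cset_disj: "c \<noteq> c' \<Longrightarrow> cset C c \<inter> cset C c' = {}"
  unfolding cset_def by auto

lemma cset_inter[simp]: "cset C c \<inter> cset C c' = (if c = c' then cset C c else {})"
  unfolding cset_def by auto

lemma in_cset: "b \<in> cset C c \<longleftrightarrow> cls C b = c"
  unfolding cset_def by simp

lemma sum_vars:
  fixes C :: "('n, 'b::finite) circuit"
  shows "(\<Sum>u\<in>vars C. f u) = (\<Sum>b\<in>cset C QMem. f (VQ b)) + (\<Sum>b\<in>cset C Cap. f (VQ b))
    + (\<Sum>b\<in>cset C PhiMem. f (VPh b)) + (\<Sum>b\<in>cset C Ind. f (VPh b))
    + (\<Sum>b\<in>UNIV. f (VV b)) + (\<Sum>b\<in>UNIV. f (VI b))"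
proof -
  have d1: "cset C QMem \<inter> cset C Cap = {}" "cset C PhiMem \<inter> cset C Ind = {}" by (auto simp: cset_def)
  have "vars C = (((VQ ` cset C QMem \<union> VQ ` cset C Cap) \<union> (VPh ` cset C PhiMem \<union> VPh ` cset C Ind)) \<union> range VV) \<union> range VI"
    unfolding vars_def by auto
  then have "(\<Sum>u\<in>vars C. f u) = (\<Sum>u\<in>(((VQ ` cset C QMem \<union> VQ ` cset C Cap) \<union> (VPh ` cset C PhiMem \<union> VPh ` cset C Ind)) \<union> range VV) \<union> range VI. f u)"
    by simp
  also have "\<dots> = (\<Sum>u\<in>(((VQ ` cset C QMem \<union> VQ ` cset C Cap) \<union> (VPh ` cset C PhiMem \<union> VPh ` cset C Ind)) \<union> range VV). f u) + (\<Sum>u\<in>range VI. f u)"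
    by (rule sum.union_disjoint) auto
  also have "(\<Sum>u\<in>(((VQ ` cset C QMem \<union> VQ ` cset C Cap) \<union> (VPh ` cset C PhiMem \<union> VPh ` cset C Ind)) \<union> range VV). f u)
     = (\<Sum>u\<in>((VQ ` cset C QMem \<union> VQ ` cset C Cap) \<union> (VPh ` cset C PhiMem \<union> VPh ` cset C Ind)). f u) + (\<Sum>u\<in>range VV. f u)"
    by (rule sum.union_disjoint) auto
  also have "(\<Sum>u\<in>((VQ ` cset C QMem \<union> VQ ` cset C Cap) \<union> (VPh ` cset C PhiMem \<union> VPh ` cset C Ind)). f u)
     = (\<Sum>u\<in>(VQ ` cset C QMem \<union> VQ ` cset C Cap). f u) + (\<Sum>u\<in>(VPh ` cset C PhiMem \<union> VPh ` cset C Ind). f u)"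
    by (rule sum.union_disjoint) auto
  also have "(\<Sum>u\<in>(VQ ` cset C QMem \<union> VQ ` cset C Cap). f u) = (\<Sum>u\<in>VQ ` cset C QMem. f u) + (\<Sum>u\<in>VQ ` cset C Cap. f u)"
    by (rule sum.union_disjoint) (auto simp: in_cset)
  also have "(\<Sum>u\<in>(VPh ` cset C PhiMem \<union> VPh ` cset C Ind). f u) = (\<Sum>u\<in>VPh ` cset C PhiMem. f u) + (\<Sum>u\<in>VPh ` cset C Ind. f u)"
    by (rule sum.union_disjoint) (auto simp: in_cset)
  finally show ?thesis by (simp add: sum.reindex inj_on_def add.assoc)
qed

lemma card_vars:
  fixes C :: "('n, 'b::finite) circuit"
  shows "card (vars C) = card (cset C QMem) + card (cset C Cap) + card (cset C PhiMem) + card (cset C Ind) + 2 * CARD('b)"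
  using sum_vars[of "\<lambda>_. 1::nat" C] by simp

lemma fin_vars: "finite (vars (C :: ('n, 'b::finite) circuit))"
  unfolding vars_def by auto

lemma fin_eqns: "finite (eqns (C :: ('n, 'b::finite) circuit))"
  unfolding eqns_def by auto

lemma card_eqns:
  fixes C :: "('n, 'b::finite) circuit"
  shows "card (eqns C) = card (cset C QMem) + card (cset C Cap) + card (cset C PhiMem) + card (cset C Ind) + CARD('b) + rB C + rD C"
proof -
  have d1: "cset C QMem \<inter> cset C Cap = {}" "cset C PhiMem \<inter> cset C Ind = {}" by (auto simp: cset_def)
  have qp: "{b. qdev (cls C b)} \<inter> {b. phidev (cls C b)} = {}" "{b. qdev (cls C b)} \<union> {b. phidev (cls C b)} = UNIV"
    unfolding qdev_def phidev_def by (auto intro: dev.exhaust)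
  have "eqns C = (((((EQ ` cset C QMem \<union> EQ ` cset C Cap) \<union> (EPh ` cset C PhiMem \<union> EPh ` cset C Ind))
     \<union> EV ` {b. qdev (cls C b)}) \<union> EI ` {b. phidev (cls C b)}) \<union> EB ` {..<rB C}) \<union> ED ` {..<rD C}"
    unfolding eqns_def by auto
  moreover have "card \<dots> = card (cset C QMem) + card (cset C Cap) + card (cset C PhiMem) + card (cset C Ind)
      + card {b. qdev (cls C b)} + card {b. phidev (cls C b)} + rB C + rD C"
  proof -
    have e1: "card (EQ ` cset C QMem \<union> EQ ` cset C Cap) = card (cset C QMem) + card (cset C Cap)"
      by (subst card_Un_disjoint) (auto simp: in_cset card_image inj_on_def)
    have e2: "card (EPh ` cset C PhiMem \<union> EPh ` cset C Ind) = card (cset C PhiMem) + card (cset C Ind)"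
      by (subst card_Un_disjoint) (auto simp: in_cset card_image inj_on_def)
    show ?thesis
      apply (subst card_Un_disjoint, simp, simp, fastforce)+
      using e1 e2 by (simp add: card_image inj_on_def)
  qed
  moreover have "card {b. qdev (cls C b)} + card {b. phidev (cls C b)} = CARD('b)"
    using card_Un_disjoint[of "{b. qdev (cls C b)}" "{b. phidev (cls C b)}"] qp by simp
  ultimately show ?thesis by simp
qed

definition "Ksum C t x d e = (\<Sum>u\<in>vars C. Kmat C t x e u * d u)"
definition "Mq C t x b b' = DG1 C t x (0, axis b' 1, 0) $ b"
definition "Rr C t x b b' = DG3 C t x (axis b' 1, 0) $ b"
definition "Nw C t x b b' = DZ1 C t x (0, axis b' 1, 0) $ b"
definition "Gg C t x b b' = DZ3 C t x (axis b' 1, 0) $ b"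

lemma z_all:
  assumes "admissible_circuit C"
  shows "DG1 C t x (0, 0, 0) = 0" "DG2 C t x (0, 0) = 0" "DG3 C t x (0, 0) = 0"
    "DZ1 C t x (0, 0, 0) = 0" "DZ2 C t x (0, 0) = 0" "DZ3 C t x (0, 0) = 0"
  using lin0[OF hd_all(1)[OF assms]] lin0[OF hd_all(2)[OF assms]] lin0[OF hd_all(3)[OF assms]]
    lin0[OF hd_all(4)[OF assms]] lin0[OF hd_all(5)[OF assms]] lin0[OF hd_all(6)[OF assms]]
  by (simp_all add: zero_prod_def)

lemma sum_if_in:
  fixes f :: "'a \<Rightarrow> real"
  assumes "finite T"
  shows "(\<Sum>b\<in>T. (if b \<in> S then f b else 0) * g b) = (\<Sum>b\<in>T \<inter> S. f b * g b)"
  using assms by (simp add: sum.inter_restrict if_distrib[of "\<lambda>c. c * _"] cong: if_cong)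

lemma E_QM:
  assumes "admissible_circuit C" "cls C b = QMem"
  shows "Kmat C t x (EV b) (VQ b') = - (if b' \<in> cset C QMem then Em C t x b b' else 0)"
    "Kmat C t x (EV b) (VPh b') = 0"
    "Kmat C t x (EV b) (VV b') = (if b' = b then 1 else 0)"
    "Kmat C t x (EV b) (VI b') = - (if b' \<in> cset C QMem then Mq C t x b b' else 0)"
  using K_EV_QM[OF assms, of t x] Em_link[OF assms(1), of t x b b'] z_all[OF assms(1), of t x]
  by (cases "b' \<in> cset C QMem"; auto simp: Mq_def)+

lemma E_Cap:
  assumes "admissible_circuit C" "cls C b = Cap"
  shows "Kmat C t x (EV b) (VQ b') = - (if b' \<in> cset C Cap then Ec C t x b b' else 0)"
    "Kmat C t x (EV b) (VPh b') = 0"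
    "Kmat C t x (EV b) (VV b') = (if b' = b then 1 else 0)"
    "Kmat C t x (EV b) (VI b') = 0"
  using K_EV_Cap[OF assms, of t x] Ec_link[OF assms(1), of t x b b'] z_all[OF assms(1), of t x]
  by (cases "b' \<in> cset C Cap"; auto)+

lemma E_CCR:
  assumes "admissible_circuit C" "cls C b = CCR"
  shows "Kmat C t x (EV b) (VQ b') = 0"
    "Kmat C t x (EV b) (VPh b') = 0"
    "Kmat C t x (EV b) (VV b') = (if b' = b then 1 else 0)"
    "Kmat C t x (EV b) (VI b') = - (if b' \<in> cset C CCR then Rr C t x b b' else 0)"
  using K_EV_CCR[OF assms, of t x] z_all[OF assms(1), of t x]
  by (cases "b' \<in> cset C CCR"; auto simp: Rr_def)+

lemma E_VSrc:
  assumes "cls C b = VSrc"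
  shows "Kmat C t x (EV b) (VQ b') = 0"
    "Kmat C t x (EV b) (VPh b') = 0"
    "Kmat C t x (EV b) (VV b') = (if b' = b then 1 else 0)"
    "Kmat C t x (EV b) (VI b') = 0"
  using K_EV_VSrc[OF assms, of t x] by auto

lemma E_PM:
  assumes "admissible_circuit C" "cls C b = PhiMem"
  shows "Kmat C t x (EI b) (VQ b') = 0"
    "Kmat C t x (EI b) (VPh b') = - (if b' \<in> cset C PhiMem then Rw C t x b b' else 0)"
    "Kmat C t x (EI b) (VV b') = - (if b' \<in> cset C PhiMem then Nw C t x b b' else 0)"
    "Kmat C t x (EI b) (VI b') = (if b' = b then 1 else 0)"
  using K_EI_PM[OF assms, of t x] Rw_link[OF assms(1), of t x b b'] z_all[OF assms(1), of t x]
  by (cases "b' \<in> cset C PhiMem"; auto simp: Nw_def)+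

lemma E_Ind:
  assumes "admissible_circuit C" "cls C b = Ind"
  shows "Kmat C t x (EI b) (VQ b') = 0"
    "Kmat C t x (EI b) (VPh b') = - (if b' \<in> cset C Ind then Rl C t x b b' else 0)"
    "Kmat C t x (EI b) (VV b') = 0"
    "Kmat C t x (EI b) (VI b') = (if b' = b then 1 else 0)"
  using K_EI_Ind[OF assms, of t x] Rl_link[OF assms(1), of t x b b'] z_all[OF assms(1), of t x]
  by (cases "b' \<in> cset C Ind"; auto)+

lemma E_VCR:
  assumes "admissible_circuit C" "cls C b = VCR"
  shows "Kmat C t x (EI b) (VQ b') = 0"
    "Kmat C t x (EI b) (VPh b') = 0"
    "Kmat C t x (EI b) (VV b') = - (if b' \<in> cset C VCR then Gg C t x b b' else 0)"
    "Kmat C t x (EI b) (VI b') = (if b' = b then 1 else 0)"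
  using K_EI_VCR[OF assms, of t x] z_all[OF assms(1), of t x]
  by (cases "b' \<in> cset C VCR"; auto simp: Gg_def)+

lemma E_ISrc:
  assumes "cls C b = ISrc"
  shows "Kmat C t x (EI b) (VQ b') = 0"
    "Kmat C t x (EI b) (VPh b') = 0"
    "Kmat C t x (EI b) (VV b') = 0"
    "Kmat C t x (EI b) (VI b') = (if b' = b then 1 else 0)"
  using K_EI_ISrc[OF assms, of t x] by auto

lemma E_EQ:
  shows "Kmat C t x (EQ b) (VQ b') = 0" "Kmat C t x (EQ b) (VPh b') = 0"
    "Kmat C t x (EQ b) (VV b') = 0" "Kmat C t x (EQ b) (VI b') = (if b' = b then 1 else 0)"
  by (auto simp: K_EQ)

lemma E_EPh:
  shows "Kmat C t x (EPh b) (VQ b') = 0" "Kmat C t x (EPh b) (VPh b') = 0"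
    "Kmat C t x (EPh b) (VV b') = (if b' = b then 1 else 0)" "Kmat C t x (EPh b) (VI b') = 0"
  by (auto simp: K_EPh)

lemma E_EB:
  shows "Kmat C t x (EB r) (VQ b') = 0" "Kmat C t x (EB r) (VPh b') = 0"
    "Kmat C t x (EB r) (VV b') = Bm C r b'" "Kmat C t x (EB r) (VI b') = 0"
  by (auto simp: K_EB)

lemma E_ED:
  shows "Kmat C t x (ED r) (VQ b') = 0" "Kmat C t x (ED r) (VPh b') = 0"
    "Kmat C t x (ED r) (VV b') = 0" "Kmat C t x (ED r) (VI b') = Dm C r b'"
  by (auto simp: K_ED)

lemmas Ksum_simps = Ksum_def sum_vars sum_if_in sum_ind sum_negf

lemma R_EQ: "Ksum C t x d (EQ b) = d (VI b)"
  by (simp add: Ksum_simps E_EQ)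
lemma R_EPh: "Ksum C t x d (EPh b) = d (VV b)"
  by (simp add: Ksum_simps E_EPh)
lemma R_EB: "Ksum C t x d (EB r) = (\<Sum>b\<in>UNIV. Bm C r b * d (VV b))"
  by (simp add: Ksum_simps E_EB)
lemma R_ED: "Ksum C t x d (ED r) = (\<Sum>b\<in>UNIV. Dm C r b * d (VI b))"
  by (simp add: Ksum_simps E_ED)
lemma R_QM: "admissible_circuit C \<Longrightarrow> cls C b = QMem \<Longrightarrow> Ksum C t x d (EV b) =
   d (VV b) - (\<Sum>b'\<in>cset C QMem. Em C t x b b' * d (VQ b')) - (\<Sum>b'\<in>cset C QMem. Mq C t x b b' * d (VI b'))"
  by (simp add: Ksum_simps E_QM)
lemma R_Cap: "admissible_circuit C \<Longrightarrow> cls C b = Cap \<Longrightarrow> Ksum C t x d (EV b) =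
   d (VV b) - (\<Sum>b'\<in>cset C Cap. Ec C t x b b' * d (VQ b'))"
  by (simp add: Ksum_simps E_Cap)
lemma R_CCR: "admissible_circuit C \<Longrightarrow> cls C b = CCR \<Longrightarrow> Ksum C t x d (EV b) =
   d (VV b) - (\<Sum>b'\<in>cset C CCR. Rr C t x b b' * d (VI b'))"
  by (simp add: Ksum_simps E_CCR)
lemma R_VSrc: "cls C b = VSrc \<Longrightarrow> Ksum C t x d (EV b) = d (VV b)"
  by (simp add: Ksum_simps E_VSrc)
lemma R_PM: "admissible_circuit C \<Longrightarrow> cls C b = PhiMem \<Longrightarrow> Ksum C t x d (EI b) =
   d (VI b) - (\<Sum>b'\<in>cset C PhiMem. Rw C t x b b' * d (VPh b')) - (\<Sum>b'\<in>cset C PhiMem. Nw C t x b b' * d (VV b'))"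
  by (simp add: Ksum_simps E_PM)
lemma R_Ind: "admissible_circuit C \<Longrightarrow> cls C b = Ind \<Longrightarrow> Ksum C t x d (EI b) =
   d (VI b) - (\<Sum>b'\<in>cset C Ind. Rl C t x b b' * d (VPh b'))"
  by (simp add: Ksum_simps E_Ind)
lemma R_VCR: "admissible_circuit C \<Longrightarrow> cls C b = VCR \<Longrightarrow> Ksum C t x d (EI b) =
   d (VI b) - (\<Sum>b'\<in>cset C VCR. Gg C t x b b' * d (VV b'))"
  by (simp add: Ksum_simps E_VCR)
lemma R_ISrc: "cls C b = ISrc \<Longrightarrow> Ksum C t x d (EI b) = d (VI b)"
  by (simp add: Ksum_simps E_ISrc)

lemma mem_eqns: "e \<in> eqns C \<longleftrightarrow> (case e of EQ b \<Rightarrow> cls C b = QMem \<or> cls C b = Cap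
    | EPh b \<Rightarrow> cls C b = PhiMem \<or> cls C b = Ind | EV b \<Rightarrow> qdev (cls C b) | EI b \<Rightarrow> phidev (cls C b)
    | EB r \<Rightarrow> r < rB C | ED r \<Rightarrow> r < rD C)"
  unfolding eqns_def by (cases e) (auto simp: in_cset)

lemma mem_vars: "u \<in> vars C \<longleftrightarrow> (case u of VQ b \<Rightarrow> cls C b = QMem \<or> cls C b = Cap
    | VPh b \<Rightarrow> cls C b = PhiMem \<or> cls C b = Ind | _ \<Rightarrow> True)"
  unfolding vars_def by (cases u) (auto simp: in_cset)

definition rowsP :: "('n, 'b::finite) circuit \<Rightarrow> real \<Rightarrow> ('b cvar \<Rightarrow> real) \<Rightarrow> ('b cvar \<Rightarrow> real) \<Rightarrow> bool" where
  "rowsP C t x d \<longleftrightarrow>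
    (\<forall>b. cls C b = QMem \<or> cls C b = Cap \<longrightarrow> d (VI b) = 0) \<and>
    (\<forall>b. cls C b = PhiMem \<or> cls C b = Ind \<longrightarrow> d (VV b) = 0) \<and>
    (\<forall>r<rB C. (\<Sum>b\<in>UNIV. Bm C r b * d (VV b)) = 0) \<and>
    (\<forall>r<rD C. (\<Sum>b\<in>UNIV. Dm C r b * d (VI b)) = 0) \<and>
    (\<forall>b. cls C b = QMem \<longrightarrow> d (VV b) - (\<Sum>b'\<in>cset C QMem. Em C t x b b' * d (VQ b')) - (\<Sum>b'\<in>cset C QMem. Mq C t x b b' * d (VI b')) = 0) \<and>
    (\<forall>b. cls C b = Cap \<longrightarrow> d (VV b) - (\<Sum>b'\<in>cset C Cap. Ec C t x b b' * d (VQ b')) = 0) \<and>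
    (\<forall>b. cls C b = CCR \<longrightarrow> d (VV b) - (\<Sum>b'\<in>cset C CCR. Rr C t x b b' * d (VI b')) = 0) \<and>
    (\<forall>b. cls C b = VSrc \<longrightarrow> d (VV b) = 0) \<and>
    (\<forall>b. cls C b = PhiMem \<longrightarrow> d (VI b) - (\<Sum>b'\<in>cset C PhiMem. Rw C t x b b' * d (VPh b')) - (\<Sum>b'\<in>cset C PhiMem. Nw C t x b b' * d (VV b')) = 0) \<and>
    (\<forall>b. cls C b = Ind \<longrightarrow> d (VI b) - (\<Sum>b'\<in>cset C Ind. Rl C t x b b' * d (VPh b')) = 0) \<and>
    (\<forall>b. cls C b = VCR \<longrightarrow> d (VI b) - (\<Sum>b'\<in>cset C VCR. Gg C t x b b' * d (VV b')) = 0) \<and>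
    (\<forall>b. cls C b = ISrc \<longrightarrow> d (VI b) = 0)"

lemma all_rows:
  assumes adm: "admissible_circuit C"
  shows "(\<forall>e\<in>eqns C. Ksum C t x d e = 0) \<longleftrightarrow> rowsP C t x d"
proof
  assume h: "\<forall>e\<in>eqns C. Ksum C t x d e = 0"
  have q: "qdev QMem" "qdev Cap" "qdev CCR" "qdev VSrc" "phidev PhiMem" "phidev Ind" "phidev VCR" "phidev ISrc"
    unfolding qdev_def phidev_def by auto
  have eq: "cls C b = QMem \<or> cls C b = Cap \<Longrightarrow> Ksum C t x d (EQ b) = 0" for b using h by (simp add: mem_eqns)
  have eph: "cls C b = PhiMem \<or> cls C b = Ind \<Longrightarrow> Ksum C t x d (EPh b) = 0" for b using h by (simp add: mem_eqns)
  have eb: "r < rB C \<Longrightarrow> Ksum C t x d (EB r) = 0" for r using h by (simp add: mem_eqns)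
  have ed: "r < rD C \<Longrightarrow> Ksum C t x d (ED r) = 0" for r using h by (simp add: mem_eqns)
  have ev: "qdev (cls C b) \<Longrightarrow> Ksum C t x d (EV b) = 0" for b using h by (simp add: mem_eqns)
  have ei: "phidev (cls C b) \<Longrightarrow> Ksum C t x d (EI b) = 0" for b using h by (simp add: mem_eqns)
  show "rowsP C t x d" unfolding rowsP_def
    apply (intro conjI allI impI)
    subgoal for b using eq[of b] by (simp add: R_EQ)
    subgoal for b using eph[of b] by (simp add: R_EPh)
    subgoal for r using eb[of r] by (simp add: R_EB)
    subgoal for r using ed[of r] by (simp add: R_ED)
    subgoal for b using ev[of b] q by (simp add: R_QM[OF adm])
    subgoal for b using ev[of b] q by (simp add: R_Cap[OF adm])
    subgoal for b using ev[of b] q by (simp add: R_CCR[OF adm])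
    subgoal for b using ev[of b] q by (simp add: R_VSrc)
    subgoal for b using ei[of b] q by (simp add: R_PM[OF adm])
    subgoal for b using ei[of b] q by (simp add: R_Ind[OF adm])
    subgoal for b using ei[of b] q by (simp add: R_VCR[OF adm])
    subgoal for b using ei[of b] q by (simp add: R_ISrc)
    done
next
  assume h: "rowsP C t x d"
  show "\<forall>e\<in>eqns C. Ksum C t x d e = 0"
  proof
    fix e assume e: "e \<in> eqns C"
    show "Ksum C t x d e = 0"
    proof (cases e)
      case (EV b)
      then have "qdev (cls C b)" using e by (simp add: mem_eqns)
      then have "cls C b = QMem \<or> cls C b = Cap \<or> cls C b = CCR \<or> cls C b = VSrc" unfolding qdev_def by auto
      then show ?thesis using h EV unfolding rowsP_def
        by (auto simp: R_QM[OF adm] R_Cap[OF adm] R_CCR[OF adm] R_VSrc)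
    next
      case (EI b)
      then have "phidev (cls C b)" using e by (simp add: mem_eqns)
      then have "cls C b = PhiMem \<or> cls C b = Ind \<or> cls C b = VCR \<or> cls C b = ISrc" unfolding phidev_def by auto
      then show ?thesis using h EI unfolding rowsP_def
        by (auto simp: R_PM[OF adm] R_Ind[OF adm] R_VCR[OF adm] R_ISrc)
    qed (use h e in \<open>auto simp: rowsP_def mem_eqns R_EQ R_EPh R_EB R_ED\<close>)
  qed
qed

lemma span_perp:
  assumes "reduced_matrix P A r" "\<forall>k<r. (\<Sum>b\<in>UNIV. A k b * v b) = 0" "P w"
  shows "(\<Sum>b\<in>UNIV. w b * v b) = 0"
proof -
  obtain c where c: "\<forall>b. w b = (\<Sum>k<r. c k * A k b)" using assms(1,3) unfolding reduced_matrix_def by blast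
  have "(\<Sum>b\<in>UNIV. w b * v b) = (\<Sum>b\<in>UNIV. \<Sum>k<r. c k * (A k b * v b))"
    using c by (simp add: sum_distrib_right mult.assoc)
  also have "\<dots> = (\<Sum>k<r. c k * (\<Sum>b\<in>UNIV. A k b * v b))"
    by (subst sum.swap) (simp add: sum_distrib_left)
  also have "\<dots> = 0" using assms(2) by simp
  finally show ?thesis .
qed

lemma quad_nonneg:
  assumes "posdef S A"
  shows "0 \<le> (\<Sum>b\<in>S. \<Sum>b'\<in>S. u b * A b b' * u b')"
    "(\<Sum>b\<in>S. \<Sum>b'\<in>S. u b * A b b' * u b') = 0 \<Longrightarrow> b \<in> S \<Longrightarrow> u b = 0"
proof -
  show "0 \<le> (\<Sum>b\<in>S. \<Sum>b'\<in>S. u b * A b b' * u b')"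
  proof (cases "\<exists>b\<in>S. u b \<noteq> 0")
    case True then show ?thesis using assms unfolding posdef_def by (auto intro: less_imp_le)
  next
    case False then show ?thesis by simp
  qed
  show "u b = 0" if "(\<Sum>b\<in>S. \<Sum>b'\<in>S. u b * A b b' * u b') = 0" "b \<in> S"
    using assms that unfolding posdef_def by force
qed

lemma sing_ker:
  assumes "finite S" "\<not> nonsingular S S A"
  shows "\<exists>u. (\<forall>i\<in>S. (\<Sum>j\<in>S. A i j * u j) = 0) \<and> (\<exists>j\<in>S. u j \<noteq> 0)"
  using square_inj_nonsing[OF assms(1), of A] assms(2) by blast

lemma inv_apply:
  assumes "nonsingular S S A" "finite S"
  shows "\<exists>y. \<forall>b\<in>S. (\<Sum>b'\<in>S. A b b' * y b') = w b"
proof -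
  obtain L where L: "\<forall>e\<in>S. \<forall>e'\<in>S. (\<Sum>u\<in>S. A e u * L u e') = (if e = e' then 1 else 0)"
    using assms(1) unfolding nonsingular_def by blast
  show ?thesis
  proof (intro exI[of _ "\<lambda>b'. \<Sum>b''\<in>S. L b' b'' * w b''"] ballI)
    fix b assume b: "b \<in> S"
    have "(\<Sum>b'\<in>S. A b b' * (\<Sum>b''\<in>S. L b' b'' * w b'')) = (\<Sum>b''\<in>S. (\<Sum>b'\<in>S. A b b' * L b' b'') * w b'')"
      by (rule sum_swap_mult2)
    also have "\<dots> = (\<Sum>b''\<in>S. (if b = b'' then 1 else 0) * w b'')"
      using L b by (intro sum.cong) auto
    also have "\<dots> = w b" using b assms(2) by (simp add: sum_ind)
    finally show "(\<Sum>b'\<in>S. A b b' * (\<Sum>b''\<in>S. L b' b'' * w b'')) = w b" .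
  qed
qed

lemma fin_cset: "finite (cset (C::('n, 'b::finite) circuit) c)" by simp

lemma comb_perp:
  assumes "\<forall>k<r. (\<Sum>b\<in>UNIV. A k b * v b) = 0"
  shows "(\<Sum>b\<in>UNIV. (\<Sum>k<r. A k b * c k) * v b) = (0::real)"
proof -
  have "(\<Sum>b\<in>UNIV. (\<Sum>k<r. A k b * c k) * v b) = (\<Sum>b\<in>UNIV. \<Sum>k<r. c k * (A k b * v b))"
    by (intro sum.cong refl) (simp add: sum_distrib_right sum_distrib_left mult_ac)
  also have "\<dots> = (\<Sum>k<r. c k * (\<Sum>b\<in>UNIV. A k b * v b))"
    by (subst sum.swap) (simp add: sum_distrib_left)
  also have "\<dots> = 0" using assms by simp
  finally show ?thesis .
qed

lemma rank_bound:
  fixes C :: "('n::finite, 'b::finite) circuit"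
  assumes adm: "admissible_circuit C"
  shows "rB C + rD C \<le> CARD('b)"
proof (rule ccontr)
  assume "\<not> rB C + rD C \<le> CARD('b)"
  then have lt: "card (UNIV::'b set) < rB C + rD C" by simp
  have redB: "reduced_matrix (loop_vec C) (Bm C) (rB C)" and redD: "reduced_matrix (cutset_vec C) (Dm C) (rD C)"
    using adm unfolding admissible_circuit_def by auto
  define J where "J = Inl ` {..<rB C} \<union> Inr ` {..<rD C}"
  define A where "A = (\<lambda>b j. case j of Inl k \<Rightarrow> Bm C k b | Inr k \<Rightarrow> Dm C k b)"
  have sJ: "(\<Sum>j\<in>J. f j) = (\<Sum>k<rB C. f (Inl k)) + (\<Sum>k<rD C. f (Inr k))" for f :: "nat + nat \<Rightarrow> real"
    unfolding J_def by (subst sum.union_disjoint) (auto simp: sum.reindex)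
  have cJ: "card J = rB C + rD C" unfolding J_def
    by (subst card_Un_disjoint) (auto simp: card_image)
  obtain c where c: "\<exists>j\<in>J. c j \<noteq> 0" "\<forall>b\<in>UNIV. (\<Sum>j\<in>J. A b j * c j) = 0"
    using elim_nontriv[of "UNIV::'b set" J A] lt cJ unfolding J_def by auto
  define z where "z = (\<lambda>b. \<Sum>k<rB C. Bm C k b * c (Inl k))"
  define w where "w = (\<lambda>b. \<Sum>k<rD C. Dm C k b * c (Inr k))"
  have zw: "z b + w b = 0" for b using c(2) unfolding sJ z_def w_def A_def by simp
  have Dperp: "\<forall>k<rB C. (\<Sum>b\<in>UNIV. Bm C k b * Dm C k' b) = 0" if "k' < rD C" for k'
    using orth_vecs redB redD that unfolding reduced_matrix_def by blast
  have "\<forall>k<rB C. (\<Sum>b\<in>UNIV. Bm C k b * w b) = 0"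
  proof (intro allI impI)
    fix k assume k: "k < rB C"
    have "\<forall>k'<rD C. (\<Sum>b\<in>UNIV. Dm C k' b * Bm C k b) = 0"
      using Dperp k by (simp add: mult.commute)
    from comb_perp[OF this, of "\<lambda>k'. c (Inr k')"]
    show "(\<Sum>b\<in>UNIV. Bm C k b * w b) = 0" unfolding w_def by (simp add: mult.commute)
  qed
  from comb_perp[OF this, of "\<lambda>k. c (Inl k)"] have "(\<Sum>b\<in>UNIV. z b * w b) = 0" unfolding z_def .
  then have "(\<Sum>b\<in>UNIV. z b * z b) = 0" using zw by (simp add: eq_neg_iff_add_eq_0[symmetric] sum_negf)
  then have z0: "z b = 0" for b using sum_nonneg_eq_0_iff[of UNIV "\<lambda>b. z b * z b"] by simp
  have w0: "w b = 0" for b using zw[of b] z0[of b] by simp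
  have h1: "\<forall>b. (\<Sum>k<rB C. (\<lambda>k. c (Inl k)) k * Bm C k b) = 0" using z0 by (simp add: z_def mult.commute)
  have ind1: "\<And>c. (\<forall>b. (\<Sum>k<rB C. c k * Bm C k b) = 0) \<Longrightarrow> \<forall>k<rB C. c k = 0"
    using redB unfolding reduced_matrix_def by blast
  have cB: "\<forall>k<rB C. c (Inl k) = 0" using ind1[of "\<lambda>k. c (Inl k)"] h1 by simp
  have h2: "\<forall>b. (\<Sum>k<rD C. (\<lambda>k. c (Inr k)) k * Dm C k b) = 0" using w0 by (simp add: w_def mult.commute)
  have ind2: "\<And>c. (\<forall>b. (\<Sum>k<rD C. c k * Dm C k b) = 0) \<Longrightarrow> \<forall>k<rD C. c k = 0"
    using redD unfolding reduced_matrix_def by blast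
  have cD: "\<forall>k<rD C. c (Inr k) = 0" using ind2[of "\<lambda>k. c (Inr k)"] h2 by simp
  show False using c(1) cB cD unfolding J_def by auto
qed

lemma nonsing_eqcard:
  fixes A :: "'i \<Rightarrow> 'j \<Rightarrow> real"
  assumes fin: "finite I" "finite J" and cd: "card I = card J"
    and inj1: "\<forall>x. (\<forall>i\<in>I. (\<Sum>j\<in>J. A i j * x j) = 0) \<longrightarrow> (\<forall>j\<in>J. x j = 0)"
  shows "nonsingular I J A"
proof (rule nonsing_from_inj[OF fin inj1], intro allI impI ballI)
  have "\<forall>e'\<in>I. \<exists>x. \<forall>i\<in>I. (\<Sum>j\<in>J. A i j * x j) = (if i = e' then 1 else 0)"
    using solve_sys[OF fin _ inj1] cd by auto
  then obtain R where R: "\<forall>e'\<in>I. \<forall>i\<in>I. (\<Sum>j\<in>J. A i j * R e' j) = (if i = e' then 1 else 0)"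
    by metis
  fix y i assume y: "\<forall>j\<in>J. (\<Sum>i\<in>I. y i * A i j) = 0" and i: "i \<in> I"
  have "y i = (\<Sum>e\<in>I. y e * (if e = i then 1 else 0))"
    using i fin by (simp add: sum_ind)
  also have "\<dots> = (\<Sum>e\<in>I. y e * (\<Sum>j\<in>J. A e j * R i j))"
    using R i by (intro sum.cong) auto
  also have "\<dots> = (\<Sum>j\<in>J. (\<Sum>e\<in>I. y e * A e j) * R i j)"
    by (rule sum_swap_mult2)
  also have "\<dots> = 0" using y by simp
  finally show "y i = 0" .
qed

lemma ker_triv:
  fixes C :: "('n::finite, 'b::finite) circuit"
  assumes adm: "admissible_circuit C" and Rp: "R_posdef C" and Gp: "G_posdef C"
    and nE: "nonsingular (cset C QMem) (cset C QMem) (Em C t x)"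
    and nEc: "nonsingular (cset C Cap) (cset C Cap) (Ec C t x)"
    and nRw: "nonsingular (cset C PhiMem) (cset C PhiMem) (Rw C t x)"
    and nRl: "nonsingular (cset C Ind) (cset C Ind) (Rl C t x)"
    and noL: "\<not> (\<exists>L. VLW_loop C L)" and noS: "\<not> (\<exists>S. ICM_cutset C S)"
    and rows: "rowsP C t x d"
  shows "\<forall>u\<in>vars C. d u = 0"
proof -
  define dv where "dv = (\<lambda>b. d (VV b))"
  define di where "di = (\<lambda>b. d (VI b))"
  have h1: "\<And>b. cls C b = QMem \<or> cls C b = Cap \<Longrightarrow> di b = 0"
    and h2: "\<And>b. cls C b = PhiMem \<or> cls C b = Ind \<Longrightarrow> dv b = 0"
    and h3: "\<forall>r<rB C. (\<Sum>b\<in>UNIV. Bm C r b * dv b) = 0"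
    and h4: "\<forall>r<rD C. (\<Sum>b\<in>UNIV. Dm C r b * di b) = 0"
    and h5: "\<And>b. cls C b = QMem \<Longrightarrow> dv b - (\<Sum>b'\<in>cset C QMem. Em C t x b b' * d (VQ b')) - (\<Sum>b'\<in>cset C QMem. Mq C t x b b' * di b') = 0"
    and h6: "\<And>b. cls C b = Cap \<Longrightarrow> dv b - (\<Sum>b'\<in>cset C Cap. Ec C t x b b' * d (VQ b')) = 0"
    and h7: "\<And>b. cls C b = CCR \<Longrightarrow> dv b - (\<Sum>b'\<in>cset C CCR. Rr C t x b b' * di b') = 0"
    and h8: "\<And>b. cls C b = VSrc \<Longrightarrow> dv b = 0"
    and h9: "\<And>b. cls C b = PhiMem \<Longrightarrow> di b - (\<Sum>b'\<in>cset C PhiMem. Rw C t x b b' * d (VPh b')) - (\<Sum>b'\<in>cset C PhiMem. Nw C t x b b' * dv b') = 0"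
    and h10: "\<And>b. cls C b = Ind \<Longrightarrow> di b - (\<Sum>b'\<in>cset C Ind. Rl C t x b b' * d (VPh b')) = 0"
    and h11: "\<And>b. cls C b = VCR \<Longrightarrow> di b - (\<Sum>b'\<in>cset C VCR. Gg C t x b b' * dv b') = 0"
    and h12: "\<And>b. cls C b = ISrc \<Longrightarrow> di b = 0"
    using rows unfolding rowsP_def dv_def di_def by auto
  have redB: "reduced_matrix (loop_vec C) (Bm C) (rB C)" and redD: "reduced_matrix (cutset_vec C) (Dm C) (rD C)"
    using adm unfolding admissible_circuit_def by auto
  have lp: "\<forall>w. loop_vec C w \<longrightarrow> (\<Sum>b\<in>UNIV. w b * dv b) = 0"
    using span_perp[OF redB h3] by blast
  have cp: "\<forall>c. cutset_vec C c \<longrightarrow> (\<Sum>b\<in>UNIV. c b * di b) = 0"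
    using span_perp[OF redD h4] by blast
  have tel: "(\<Sum>b\<in>UNIV. dv b * di b) = 0" by (rule tellegen[OF lp cp])
  define QR where "QR = (\<Sum>b\<in>cset C CCR. \<Sum>b'\<in>cset C CCR. di b * Rr C t x b b' * di b')"
  define QG where "QG = (\<Sum>b\<in>cset C VCR. \<Sum>b'\<in>cset C VCR. dv b * Gg C t x b b' * dv b')"
  have pw: "dv b * di b = (if b \<in> cset C CCR then di b * (\<Sum>b'\<in>cset C CCR. Rr C t x b b' * di b') else 0)
      + (if b \<in> cset C VCR then dv b * (\<Sum>b'\<in>cset C VCR. Gg C t x b b' * dv b') else 0)" for b
  proof (cases "cls C b")
    case QMem then show ?thesis using h1[of b] by (simp add: in_cset)
  next
    case Cap then show ?thesis using h1[of b] by (simp add: in_cset)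
  next
    case CCR then show ?thesis using h7[of b] by (simp add: in_cset mult.commute)
  next
    case VSrc then show ?thesis using h8[of b] by (simp add: in_cset)
  next
    case PhiMem then show ?thesis using h2[of b] by (simp add: in_cset)
  next
    case Ind then show ?thesis using h2[of b] by (simp add: in_cset)
  next
    case VCR then show ?thesis using h11[of b] by (simp add: in_cset)
  next
    case ISrc then show ?thesis using h12[of b] by (simp add: in_cset)
  qed
  have "(\<Sum>b\<in>UNIV. dv b * di b) = QR + QG"
  proof -
    have "(\<Sum>b\<in>UNIV. dv b * di b) = (\<Sum>b\<in>UNIV. (if b \<in> cset C CCR then di b * (\<Sum>b'\<in>cset C CCR. Rr C t x b b' * di b') else 0))
      + (\<Sum>b\<in>UNIV. (if b \<in> cset C VCR then dv b * (\<Sum>b'\<in>cset C VCR. Gg C t x b b' * dv b') else 0))"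
      unfolding pw by (rule sum.distrib)
    also have "\<dots> = QR + QG"
      by (simp add: QR_def QG_def sum.inter_restrict[symmetric] sum_distrib_left mult.assoc)
    finally show ?thesis .
  qed
  then have QRG: "QR + QG = 0" using tel by simp
  have posR: "posdef (cset C CCR) (Rr C t x)"
    using R_link[OF adm Rp, of t x] unfolding Rr_def by (simp add: fun_eq_iff)
  have posG: "posdef (cset C VCR) (Gg C t x)"
    using G_link[OF adm Gp, of t x] unfolding Gg_def by (simp add: fun_eq_iff)
  have "0 \<le> QR" unfolding QR_def by (rule quad_nonneg(1)[OF posR])
  moreover have "0 \<le> QG" unfolding QG_def by (rule quad_nonneg(1)[OF posG])
  ultimately have "QR = 0" "QG = 0" using QRG by linarith+
  then have diR: "\<And>b. cls C b = CCR \<Longrightarrow> di b = 0" and dvG: "\<And>b. cls C b = VCR \<Longrightarrow> dv b = 0"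
    using quad_nonneg(2)[OF posR, of di] quad_nonneg(2)[OF posG, of dv] unfolding QR_def QG_def
    by (auto simp: in_cset)
  have di0: "di b = 0" for b
  proof (rule ccontr)
    assume "di b \<noteq> 0"
    from L2core[OF this cp] obtain L where L: "is_loop C L" "L \<subseteq> {b. di b \<noteq> 0}" by blast
    have "\<forall>b'\<in>L. cls C b' \<in> {VSrc, Ind, PhiMem}"
    proof
      fix b' assume "b' \<in> L"
      then have nz: "di b' \<noteq> 0" using L(2) by auto
      show "cls C b' \<in> {VSrc, Ind, PhiMem}"
      proof (cases "cls C b'")
        case VCR
        have "(\<Sum>b''\<in>cset C VCR. Gg C t x b' b'' * dv b'') = 0"
          by (rule sum.neutral) (auto simp: in_cset dvG)
        then show ?thesis using h11[OF VCR] nz by simp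
      qed (use nz h1 diR h12 in auto)
    qed
    then show False using noL L(1) unfolding VLW_loop_def by blast
  qed
  have dv0: "dv b = 0" for b
  proof (rule ccontr)
    assume "dv b \<noteq> 0"
    from L3core[OF this lp] obtain S where S: "is_cutset C S" "S \<subseteq> {b. dv b \<noteq> 0}" by blast
    have "\<forall>b'\<in>S. cls C b' \<in> {ISrc, Cap, QMem}"
    proof
      fix b' assume "b' \<in> S"
      then have nz: "dv b' \<noteq> 0" using S(2) by auto
      show "cls C b' \<in> {ISrc, Cap, QMem}"
      proof (cases "cls C b'")
        case CCR
        have "(\<Sum>b''\<in>cset C CCR. Rr C t x b' b'' * di b'') = 0"
          by (rule sum.neutral) (auto simp: di0)
        then show ?thesis using h7[OF CCR] nz by simp
      qed (use nz h2 h8 dvG in auto)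
    qed
    then show False using noS S(1) unfolding ICM_cutset_def by blast
  qed
  have fQ: "finite (cset C c)" for c by simp
  have dq1: "d (VQ b) = 0" if "cls C b = QMem" for b
  proof -
    have "\<forall>i\<in>cset C QMem. (\<Sum>j\<in>cset C QMem. Em C t x i j * d (VQ j)) = 0"
      using h5 dv0 di0 by (simp add: in_cset)
    from nonsing_kernel[OF nE fQ fQ this] that show ?thesis by (simp add: in_cset)
  qed
  have dq2: "d (VQ b) = 0" if "cls C b = Cap" for b
  proof -
    have "\<forall>i\<in>cset C Cap. (\<Sum>j\<in>cset C Cap. Ec C t x i j * d (VQ j)) = 0"
      using h6 dv0 by (simp add: in_cset)
    from nonsing_kernel[OF nEc fQ fQ this] that show ?thesis by (simp add: in_cset)
  qed
  have dp1: "d (VPh b) = 0" if "cls C b = PhiMem" for b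
  proof -
    have "\<forall>i\<in>cset C PhiMem. (\<Sum>j\<in>cset C PhiMem. Rw C t x i j * d (VPh j)) = 0"
      using h9 dv0 di0 by (simp add: in_cset)
    from nonsing_kernel[OF nRw fQ fQ this] that show ?thesis by (simp add: in_cset)
  qed
  have dp2: "d (VPh b) = 0" if "cls C b = Ind" for b
  proof -
    have "\<forall>i\<in>cset C Ind. (\<Sum>j\<in>cset C Ind. Rl C t x i j * d (VPh j)) = 0"
      using h10 di0 by (simp add: in_cset)
    from nonsing_kernel[OF nRl fQ fQ this] that show ?thesis by (simp add: in_cset)
  qed
  show ?thesis
  proof
    fix u assume "u \<in> vars C"
    then show "d u = 0"
      using dq1 dq2 dp1 dp2 dv0 di0 unfolding dv_def di_def
      by (cases u) (auto simp: mem_vars)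
  qed
qed

theorem theorem2:
  fixes C :: "('n::finite, 'b::finite) circuit" and t :: real and x :: "'b cvar \<Rightarrow> real"
  assumes "admissible_circuit C"
    and "R_posdef C" and "G_posdef C"
    and "equilibrium C t x"
  shows "regular_equilibrium C t x \<longleftrightarrow>
           (nonsingular (cset C QMem) (cset C QMem) (Em C t x) \<and>
            nonsingular (cset C Cap) (cset C Cap) (Ec C t x) \<and>
            nonsingular (cset C PhiMem) (cset C PhiMem) (Rw C t x) \<and>
            nonsingular (cset C Ind) (cset C Ind) (Rl C t x)) \<and>
           \<not> (\<exists>L. VLW_loop C L) \<and> \<not> (\<exists>S. ICM_cutset C S)"
proof -
  note adm = assms(1) and Rp = assms(2) and Gp = assms(3) and eqm = assms(4)
  have fQ: "finite (cset C c)" for c by simp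
  have redB: "reduced_matrix (loop_vec C) (Bm C) (rB C)" and redD: "reduced_matrix (cutset_vec C) (Dm C) (rD C)"
    using adm unfolding admissible_circuit_def by auto
  show ?thesis
  proof
    assume reg: "regular_equilibrium C t x"
    then have nK: "nonsingular (eqns C) (vars C) (Kmat C t x)" by (simp add: regular_equilibrium_def)
    have kerK: "\<forall>u\<in>vars C. d u = 0" if r: "rowsP C t x d" for d
    proof
      fix u assume u: "u \<in> vars C"
      have "\<forall>e\<in>eqns C. (\<Sum>u\<in>vars C. Kmat C t x e u * d u) = 0"
        using all_rows[OF adm, of t x d] r unfolding Ksum_def by blast
      from nonsing_kernel[OF nK fin_eqns fin_vars this u] show "d u = 0" .
    qed
    have nE: "nonsingular (cset C QMem) (cset C QMem) (Em C t x)"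
    proof (rule ccontr)
      assume "\<not> ?thesis"
      from sing_ker[OF fQ this] obtain u where
        u: "\<forall>i\<in>cset C QMem. (\<Sum>j\<in>cset C QMem. Em C t x i j * u j) = 0" "\<exists>j\<in>cset C QMem. u j \<noteq> 0" by blast
      have u': "\<And>i. cls C i = QMem \<Longrightarrow> (\<Sum>j\<in>cset C QMem. Em C t x i j * u j) = 0" using u(1) by (simp add: in_cset)
      define d where "d = (\<lambda>v. case v of VQ b \<Rightarrow> if cls C b = QMem then u b else 0 | _ \<Rightarrow> 0)"
      have "rowsP C t x d" unfolding rowsP_def d_def using u' by (auto simp: in_cset)
      then have k: "\<forall>ua\<in>vars C. d ua = 0" by (rule kerK)
      obtain j where j: "j \<in> cset C QMem" "u j \<noteq> 0" using u(2) by blast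
      have "VQ j \<in> vars C" using j by (simp add: mem_vars in_cset)
      then have "d (VQ j) = 0" using k by blast
      then show False using j unfolding d_def by (simp add: in_cset)
    qed
    have nEc: "nonsingular (cset C Cap) (cset C Cap) (Ec C t x)"
    proof (rule ccontr)
      assume "\<not> ?thesis"
      from sing_ker[OF fQ this] obtain u where
        u: "\<forall>i\<in>cset C Cap. (\<Sum>j\<in>cset C Cap. Ec C t x i j * u j) = 0" "\<exists>j\<in>cset C Cap. u j \<noteq> 0" by blast
      have u': "\<And>i. cls C i = Cap \<Longrightarrow> (\<Sum>j\<in>cset C Cap. Ec C t x i j * u j) = 0" using u(1) by (simp add: in_cset)
      define d where "d = (\<lambda>v. case v of VQ b \<Rightarrow> if cls C b = Cap then u b else 0 | _ \<Rightarrow> 0)"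
      have "rowsP C t x d" unfolding rowsP_def d_def using u' by (auto simp: in_cset)
      then have k: "\<forall>ua\<in>vars C. d ua = 0" by (rule kerK)
      obtain j where j: "j \<in> cset C Cap" "u j \<noteq> 0" using u(2) by blast
      have "VQ j \<in> vars C" using j by (simp add: mem_vars in_cset)
      then have "d (VQ j) = 0" using k by blast
      then show False using j unfolding d_def by (simp add: in_cset)
    qed
    have nRw: "nonsingular (cset C PhiMem) (cset C PhiMem) (Rw C t x)"
    proof (rule ccontr)
      assume "\<not> ?thesis"
      from sing_ker[OF fQ this] obtain u where
        u: "\<forall>i\<in>cset C PhiMem. (\<Sum>j\<in>cset C PhiMem. Rw C t x i j * u j) = 0" "\<exists>j\<in>cset C PhiMem. u j \<noteq> 0" by blast
      have u': "\<And>i. cls C i = PhiMem \<Longrightarrow> (\<Sum>j\<in>cset C PhiMem. Rw C t x i j * u j) = 0" using u(1) by (simp add: in_cset)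
      define d where "d = (\<lambda>v. case v of VPh b \<Rightarrow> if cls C b = PhiMem then u b else 0 | _ \<Rightarrow> 0)"
      have "rowsP C t x d" unfolding rowsP_def d_def using u' by (auto simp: in_cset)
      then have k: "\<forall>ua\<in>vars C. d ua = 0" by (rule kerK)
      obtain j where j: "j \<in> cset C PhiMem" "u j \<noteq> 0" using u(2) by blast
      have "VPh j \<in> vars C" using j by (simp add: mem_vars in_cset)
      then have "d (VPh j) = 0" using k by blast
      then show False using j unfolding d_def by (simp add: in_cset)
    qed
    have nRl: "nonsingular (cset C Ind) (cset C Ind) (Rl C t x)"
    proof (rule ccontr)
      assume "\<not> ?thesis"
      from sing_ker[OF fQ this] obtain u where
        u: "\<forall>i\<in>cset C Ind. (\<Sum>j\<in>cset C Ind. Rl C t x i j * u j) = 0" "\<exists>j\<in>cset C Ind. u j \<noteq> 0" by blast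
      have u': "\<And>i. cls C i = Ind \<Longrightarrow> (\<Sum>j\<in>cset C Ind. Rl C t x i j * u j) = 0" using u(1) by (simp add: in_cset)
      define d where "d = (\<lambda>v. case v of VPh b \<Rightarrow> if cls C b = Ind then u b else 0 | _ \<Rightarrow> 0)"
      have "rowsP C t x d" unfolding rowsP_def d_def using u' by (auto simp: in_cset)
      then have k: "\<forall>ua\<in>vars C. d ua = 0" by (rule kerK)
      obtain j where j: "j \<in> cset C Ind" "u j \<noteq> 0" using u(2) by blast
      have "VPh j \<in> vars C" using j by (simp add: mem_vars in_cset)
      then have "d (VPh j) = 0" using k by blast
      then show False using j unfolding d_def by (simp add: in_cset)
    qed
    have noL: "\<not> (\<exists>L. VLW_loop C L)"
    proof
      assume "\<exists>L. VLW_loop C L"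
      then obtain L where L: "is_loop C L" "\<forall>b\<in>L. cls C b \<in> {VSrc, Ind, PhiMem}"
        unfolding VLW_loop_def by blast
      then obtain vs es where cyc: "is_cycle C vs es" "L = set es" unfolding is_loop_def by blast
      define w where "w = lv C vs es"
      have lw: "loop_vec C w" unfolding loop_vec_lv w_def using cyc by blast
      have wz: "w b = 0" if "cls C b \<noteq> VSrc" "cls C b \<noteq> Ind" "cls C b \<noteq> PhiMem" for b
      proof (rule ccontr)
        assume "w b \<noteq> 0"
        then have "b \<in> L" using lv_supp cyc unfolding w_def by blast
        then show False using L(2) that by auto
      qed
      have wD: "\<forall>r<rD C. (\<Sum>b\<in>UNIV. Dm C r b * w b) = 0"
      proof (intro allI impI)
        fix r assume "r < rD C"
        then have "cutset_vec C (Dm C r)" using redD unfolding reduced_matrix_def by blast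
        from orth_vecs[OF lw this] have "(\<Sum>b\<in>UNIV. w b * Dm C r b) = 0" .
        moreover have "(\<Sum>b\<in>UNIV. Dm C r b * w b) = (\<Sum>b\<in>UNIV. w b * Dm C r b)" by (simp add: mult.commute)
        ultimately show "(\<Sum>b\<in>UNIV. Dm C r b * w b) = 0" by simp
      qed
      obtain yw where yw: "\<forall>b\<in>cset C PhiMem. (\<Sum>b'\<in>cset C PhiMem. Rw C t x b b' * yw b') = w b"
        using inv_apply[OF nRw fQ] by blast
      obtain yl where yl: "\<forall>b\<in>cset C Ind. (\<Sum>b'\<in>cset C Ind. Rl C t x b b' * yl b') = w b"
        using inv_apply[OF nRl fQ] by blast
      have yw': "\<And>b. cls C b = PhiMem \<Longrightarrow> (\<Sum>b'\<in>cset C PhiMem. Rw C t x b b' * yw b') = w b" using yw by (simp add: in_cset)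
      have yl': "\<And>b. cls C b = Ind \<Longrightarrow> (\<Sum>b'\<in>cset C Ind. Rl C t x b b' * yl b') = w b" using yl by (simp add: in_cset)
      define d where "d = (\<lambda>v. case v of VI b \<Rightarrow> w b | VPh b \<Rightarrow> (if cls C b = PhiMem then yw b else if cls C b = Ind then yl b else 0) | _ \<Rightarrow> 0)"
      have "rowsP C t x d" unfolding rowsP_def d_def using wz wD yw' yl' by (auto simp: in_cset)
      from kerK[OF this] have "d (VI (es!0)) = 0" by (simp add: mem_vars)
      moreover have "es \<noteq> []" using cyc(1) unfolding is_cycle_def by simp
      then have "w (es!0) \<noteq> 0" using lv_nth[OF cyc(1), of 0] unfolding w_def by simp
      ultimately show False unfolding d_def by simp
    qed
    have noS: "\<not> (\<exists>S. ICM_cutset C S)"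
    proof
      assume "\<exists>S. ICM_cutset C S"
      then obtain S where S: "is_cutset C S" "\<forall>b\<in>S. cls C b \<in> {ISrc, Cap, QMem}"
        unfolding ICM_cutset_def by blast
      from cutset_cut[OF S(1)] obtain X where X: "S = cut C X" by blast
      define c where "c = cv C X"
      have cc: "cutset_vec C c" unfolding cutset_vec_cv c_def using S(1) X by blast
      have cz: "c b = 0" if "cls C b \<noteq> ISrc" "cls C b \<noteq> Cap" "cls C b \<noteq> QMem" for b
      proof (rule ccontr)
        assume "c b \<noteq> 0"
        then have "b \<in> S" using X unfolding c_def cv_def by (auto split: if_splits)
        then show False using S(2) that by auto
      qed
      have cB: "\<forall>r<rB C. (\<Sum>b\<in>UNIV. Bm C r b * c b) = 0"
      proof (intro allI impI)
        fix r assume "r < rB C"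
        then have "loop_vec C (Bm C r)" using redB unfolding reduced_matrix_def by blast
        from orth_vecs[OF this cc] show "(\<Sum>b\<in>UNIV. Bm C r b * c b) = 0" .
      qed
      obtain yq where yq: "\<forall>b\<in>cset C QMem. (\<Sum>b'\<in>cset C QMem. Em C t x b b' * yq b') = c b"
        using inv_apply[OF nE fQ] by blast
      obtain yc where yc: "\<forall>b\<in>cset C Cap. (\<Sum>b'\<in>cset C Cap. Ec C t x b b' * yc b') = c b"
        using inv_apply[OF nEc fQ] by blast
      have yq': "\<And>b. cls C b = QMem \<Longrightarrow> (\<Sum>b'\<in>cset C QMem. Em C t x b b' * yq b') = c b" using yq by (simp add: in_cset)
      have yc': "\<And>b. cls C b = Cap \<Longrightarrow> (\<Sum>b'\<in>cset C Cap. Ec C t x b b' * yc b') = c b" using yc by (simp add: in_cset)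
      define d where "d = (\<lambda>v. case v of VV b \<Rightarrow> c b | VQ b \<Rightarrow> (if cls C b = QMem then yq b else if cls C b = Cap then yc b else 0) | _ \<Rightarrow> 0)"
      have "rowsP C t x d" unfolding rowsP_def d_def using cz cB yq' yc' by (auto simp: in_cset)
      then have k: "\<forall>ua\<in>vars C. d ua = 0" by (rule kerK)
      have d0: "c b = 0" for b
      proof -
        have "VV b \<in> vars C" by (simp add: mem_vars)
        then have "d (VV b) = 0" using k by blast
        then show ?thesis unfolding d_def by simp
      qed
      have "S \<noteq> {}" using S(1) incr_empty unfolding is_cutset_def by blast
      then obtain f where "f \<in> S" by blast
      then have "c f \<noteq> 0" using X unfolding c_def cv_def by auto
      then show False using d0 by simp
    qed
    show "(nonsingular (cset C QMem) (cset C QMem) (Em C t x) \<and>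
            nonsingular (cset C Cap) (cset C Cap) (Ec C t x) \<and>
            nonsingular (cset C PhiMem) (cset C PhiMem) (Rw C t x) \<and>
            nonsingular (cset C Ind) (cset C Ind) (Rl C t x)) \<and>
           \<not> (\<exists>L. VLW_loop C L) \<and> \<not> (\<exists>S. ICM_cutset C S)"
      using nE nEc nRw nRl noL noS by blast
  next
    assume h: "(nonsingular (cset C QMem) (cset C QMem) (Em C t x) \<and>
            nonsingular (cset C Cap) (cset C Cap) (Ec C t x) \<and>
            nonsingular (cset C PhiMem) (cset C PhiMem) (Rw C t x) \<and>
            nonsingular (cset C Ind) (cset C Ind) (Rl C t x)) \<and>
           \<not> (\<exists>L. VLW_loop C L) \<and> \<not> (\<exists>S. ICM_cutset C S)"
    have inj: "\<forall>d. (\<forall>e\<in>eqns C. (\<Sum>u\<in>vars C. Kmat C t x e u * d u) = 0) \<longrightarrow> (\<forall>u\<in>vars C. d u = 0)"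
    proof (intro allI impI)
      fix d assume "\<forall>e\<in>eqns C. (\<Sum>u\<in>vars C. Kmat C t x e u * d u) = 0"
      then have "rowsP C t x d" using all_rows[OF adm, of t x d] unfolding Ksum_def by blast
      then show "\<forall>u\<in>vars C. d u = 0" using ker_triv[OF adm Rp Gp] h by blast
    qed
    have c1: "card (vars C) \<le> card (eqns C)"
    proof (rule ccontr)
      assume "\<not> ?thesis"
      then have "card (eqns C) < card (vars C)" by simp
      from elim_nontriv[OF fin_eqns fin_vars this, of "Kmat C t x"] inj show False by blast
    qed
    have c2: "card (eqns C) \<le> card (vars C)"
      using card_eqns[of C] card_vars[of C] rank_bound[OF adm] by simp
    have "nonsingular (eqns C) (vars C) (Kmat C t x)"
      by (rule nonsing_eqcard[OF fin_eqns fin_vars _ inj]) (use c1 c2 in simp)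
    then show "regular_equilibrium C t x" unfolding regular_equilibrium_def using eqm by simp
  qed
qed

end
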